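(* Let $T\in\mathbb{R}^{M\times M}$ be symmetric positive definite, let $D\in\mathbb{R}^{M\times M}$ be diagonal with nonpositive diagonal entries, and let $\omega>0$. Let $\mathcal{B},\mathcal{H},\mathcal{L}_\omega$ be as defined in the context. Then $\omega I+\mathcal{B}$ and $\omega I+\mathcal{H}$ are invertible, and the spectral radius of $\mathcal{L}_\omega$ satisfies $$\rho(\mathcal{L}_\omega)\le \sigma(\omega)<1,\qquad \sigma(\omega)=\max_{\lambda_i\in\lambda(D)}\left|\frac{\omega+\lambda_i}{\omega-\lambda_i}\right|\cdot\max_{\mu_i\in\lambda(T)}\sqrt{\frac{(\omega-\mu_i)^2+1}{(\omega+\mu_i)^2+1}},$$ where $\lambda(D)$ and $\lambda(T)$ denote the sets of eigenvalues of $D$ and $T$. In particular, the iteration $x^{(k+1)}=\mathcal{L}_\omega x^{(k)}+\mathcal{F}_\omega^{-1}f$ (equivalently, $(\omega I+\mathcal{B})x^{(k+1/2)}=(\omega I-\mathcal{H})x^{(k)}+f$, $(\omega I+\mathcal{H})x^{(k+1)}=(\omega I-\mathcal{B})x^{(k+1/2)}+f$) converges to the solution of $\mathcal{R}x=f$ for every initial guess and every $f\in\mathbb{R}^{2M}$.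
   Context: Let $T\in\mathbb{R}^{M\times M}$ and $D\in\mathbb{R}^{M\times M}$ be as stated, and let $I$ denote the identity matrix of the appropriate size. Define the $2M\times 2M$ real block matrices $$\mathcal{R}=\begin{bmatrix}T-D & -I\\ I & T-D\end{bmatrix},\quad \mathcal{B}=\begin{bmatrix}-D&0\\0&-D\end{bmatrix},\quad \mathcal{H}=\begin{bmatrix}T&-I\\ I&T\end{bmatrix},$$ so that $\mathcal{R}=\mathcal{B}+\mathcal{H}$. For $\omega>0$ define $$\mathcal{F}_\omega=\tfrac{1}{2\omega}(\omega I+\mathcal{B})(\omega I+\mathcal{H}),\quad \mathcal{G}_\omega=\tfrac{1}{2\omega}(\omega I-\mathcal{B})(\omega I-\mathcal{H}),$$ $$\mathcal{L}_\omega=(\omega I+\mathcal{H})^{-1}(\omega I-\mathcal{B})(\omega I+\mathcal{B})^{-1}(\omega I-\mathcal{H})=\mathcal{F}_\omega^{-1}\mathcal{G}_\omega .$$ *)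

theory Defs
  imports "Jordan_Normal_Form.Spectral_Radius"
begin

definition spd_mat :: "nat \<Rightarrow> real mat \<Rightarrow> bool" where
  "spd_mat n T \<longleftrightarrow> T \<in> carrier_mat n n \<and> transpose_mat T = T \<and>
     (\<forall>x \<in> carrier_vec n. x \<noteq> 0\<^sub>v n \<longrightarrow> x \<bullet> (T *\<^sub>v x) > 0)"

text \<open>The inverse of a square matrix (meaningful when the matrix is invertible).\<close>
definition inv_mat :: "real mat \<Rightarrow> real mat" where
  "inv_mat A = (SOME B. B \<in> carrier_mat (dim_row A) (dim_row A) \<and>
                         A * B = 1\<^sub>m (dim_row A) \<and> B * A = 1\<^sub>m (dim_row A))"

definition Rblk :: "real mat \<Rightarrow> real mat \<Rightarrow> real mat" where
  "Rblk T D = four_block_mat (T - D) (- 1\<^sub>m (dim_row D)) (1\<^sub>m (dim_row D)) (T - D)"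

definition Bblk :: "real mat \<Rightarrow> real mat" where
  "Bblk D = four_block_mat (- D) (0\<^sub>m (dim_row D) (dim_row D)) (0\<^sub>m (dim_row D) (dim_row D)) (- D)"

definition Hblk :: "real mat \<Rightarrow> real mat" where
  "Hblk T = four_block_mat T (- 1\<^sub>m (dim_row T)) (1\<^sub>m (dim_row T)) T"

definition Fmat :: "real \<Rightarrow> real mat \<Rightarrow> real mat \<Rightarrow> real mat" where
  "Fmat \<omega> T D = (let n = 2 * dim_row D in
     (1 / (2 * \<omega>)) \<cdot>\<^sub>m ((\<omega> \<cdot>\<^sub>m 1\<^sub>m n + Bblk D) * (\<omega> \<cdot>\<^sub>m 1\<^sub>m n + Hblk T)))"

definition Gmat :: "real \<Rightarrow> real mat \<Rightarrow> real mat \<Rightarrow> real mat" where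
  "Gmat \<omega> T D = (let n = 2 * dim_row D in
     (1 / (2 * \<omega>)) \<cdot>\<^sub>m ((\<omega> \<cdot>\<^sub>m 1\<^sub>m n - Bblk D) * (\<omega> \<cdot>\<^sub>m 1\<^sub>m n - Hblk T)))"

definition Lmat :: "real \<Rightarrow> real mat \<Rightarrow> real mat \<Rightarrow> real mat" where
  "Lmat \<omega> T D = (let n = 2 * dim_row D in
     inv_mat (\<omega> \<cdot>\<^sub>m 1\<^sub>m n + Hblk T) * (\<omega> \<cdot>\<^sub>m 1\<^sub>m n - Bblk D)
       * inv_mat (\<omega> \<cdot>\<^sub>m 1\<^sub>m n + Bblk D) * (\<omega> \<cdot>\<^sub>m 1\<^sub>m n - Hblk T))"

definition sigma :: "real \<Rightarrow> real mat \<Rightarrow> real mat \<Rightarrow> real" where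
  "sigma \<omega> T D =
     Max ((\<lambda>l. \<bar>(\<omega> + l) / (\<omega> - l)\<bar>) ` {l. eigenvalue D l}) *
     Max ((\<lambda>m. sqrt (((\<omega> - m)^2 + 1) / ((\<omega> + m)^2 + 1))) ` {m. eigenvalue T m})"

definition vec_tendsto :: "(nat \<Rightarrow> real vec) \<Rightarrow> real vec \<Rightarrow> bool" where
  "vec_tendsto X x \<longleftrightarrow> (\<forall>i < dim_vec x. (\<lambda>k. X k $ i) \<longlonglongrightarrow> x $ i)"

end

theory Submission
  imports Defs
begin

definition rv :: "complex vec \<Rightarrow> real vec" where "rv v = map_vec Re v"
definition iv :: "complex vec \<Rightarrow> real vec" where "iv v = map_vec Im v"
definition sqn :: "complex vec \<Rightarrow> real" where "sqn v = (\<Sum>i<dim_vec v. (cmod (v $ i))^2)"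

lemma rv_carrier[simp]: "dim_vec (rv v) = dim_vec v" "dim_vec (iv v) = dim_vec v"
  by (auto simp: rv_def iv_def)
lemma rv_index[simp]: "i < dim_vec v \<Longrightarrow> rv v $ i = Re (v $ i)"
  "i < dim_vec v \<Longrightarrow> iv v $ i = Im (v $ i)" by (auto simp: rv_def iv_def)

lemma rv_mult: assumes A: "A \<in> carrier_mat m n" and v: "v \<in> carrier_vec n"
  shows "rv (map_mat complex_of_real A *\<^sub>v v) = A *\<^sub>v rv v"
    "iv (map_mat complex_of_real A *\<^sub>v v) = A *\<^sub>v iv v"
  using A v by (auto intro!: eq_vecI simp: scalar_prod_def Re_sum Im_sum)

lemma sqn_split: "sqn v = rv v \<bullet> rv v + iv v \<bullet> iv v"
proof -
  have "\<And>i. (cmod (v$i))^2 = Re(v$i)*Re(v$i) + Im(v$i)*Im(v$i)" by (metis cmod_power2 power2_eq_square)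
  then have "sqn v = (\<Sum>i<dim_vec v. Re(v$i)*Re(v$i) + Im(v$i)*Im(v$i))" unfolding sqn_def by (intro sum.cong) auto
  also have "\<dots> = (\<Sum>i<dim_vec v. Re(v$i)*Re(v$i)) + (\<Sum>i<dim_vec v. Im(v$i)*Im(v$i))" by (rule sum.distrib)
  finally show ?thesis unfolding scalar_prod_def by (simp add: lessThan_atLeast0)
qed

lemma sqn_smult: "sqn (c \<cdot>\<^sub>v v) = (cmod c)^2 * sqn v"
  by (auto simp: sqn_def sum_distrib_left norm_mult power_mult_distrib)

lemma vec_zero_iff_rv_iv: assumes v: "v \<in> carrier_vec n"
  shows "v = 0\<^sub>v n \<longleftrightarrow> rv v = 0\<^sub>v n \<and> iv v = 0\<^sub>v n"
proof
  assume h: "rv v = 0\<^sub>v n \<and> iv v = 0\<^sub>v n"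
  show "v = 0\<^sub>v n"
  proof (rule eq_vecI)
    fix i assume "i < dim_vec (0\<^sub>v n :: complex vec)"
    then have i: "i < n" by simp
    have "rv v $ i = 0" "iv v $ i = 0" using h i by auto
    then have "Re (v $ i) = 0" "Im (v $ i) = 0" using i v by auto
    then show "v $ i = 0\<^sub>v n $ i" using i by (simp add: complex_eq_iff)
  qed (use v in auto)
qed (auto simp: rv_def iv_def)

lemma sq_real_nonneg: "(x :: real vec) \<bullet> x \<ge> 0"
  unfolding scalar_prod_def by (auto intro: sum_nonneg)

lemma conj_real_vec[simp]: "conjugate (x :: real vec) = x"
  by (rule eq_vecI) (auto simp: conjugate_vec_def)

lemma sq_real_eq0: "(x :: real vec) \<in> carrier_vec n \<Longrightarrow> x \<bullet> x = 0 \<longleftrightarrow> x = 0\<^sub>v n"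
  using conjugate_square_eq_0_vec[of x n] by simp

lemma sqn_pos: assumes v: "v \<in> carrier_vec n" and nz: "v \<noteq> 0\<^sub>v n" shows "sqn v > 0"
proof -
  have r1: "rv v \<in> carrier_vec n" and r2: "iv v \<in> carrier_vec n" by (rule carrier_vecI, simp add: carrier_vecD[OF v])+
  have o: "rv v \<noteq> 0\<^sub>v n \<or> iv v \<noteq> 0\<^sub>v n" using vec_zero_iff_rv_iv[OF v] nz by simp
  have a: "rv v \<bullet> rv v \<ge> 0" by (rule sq_real_nonneg)
  have b: "iv v \<bullet> iv v \<ge> 0" by (rule sq_real_nonneg)
  have c: "rv v \<bullet> rv v \<noteq> 0 \<or> iv v \<bullet> iv v \<noteq> 0"
  proof (cases "rv v = 0\<^sub>v n")
    case True
    then have "iv v \<noteq> 0\<^sub>v n" using o by simp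
    then show ?thesis using sq_real_eq0[OF r2] by simp
  next
    case False
    then show ?thesis using sq_real_eq0[OF r1] by simp
  qed
  have "sqn v = rv v \<bullet> rv v + iv v \<bullet> iv v" by (rule sqn_split)
  then show ?thesis using a b c by linarith
qed

lemma rv_carrier_vec[simp]: "v \<in> carrier_vec n \<Longrightarrow> rv v \<in> carrier_vec n"
  "v \<in> carrier_vec n \<Longrightarrow> iv v \<in> carrier_vec n"
  by (rule carrier_vecI, simp add: carrier_vecD)+

lemma sym_scalar: assumes S: "S \<in> carrier_mat n n" and St: "transpose_mat S = S"
  and x: "x \<in> carrier_vec n" and z: "z \<in> carrier_vec n"
  shows "(S *\<^sub>v x) \<bullet> z = x \<bullet> (S *\<^sub>v (z :: real vec))"
proof -
  have "(S *\<^sub>v x) \<bullet> z = z \<bullet> (S *\<^sub>v x)"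
    by (rule comm_scalar_prod[OF mult_mat_vec_carrier[OF S x] z])
  also have "\<dots> = (transpose_mat S *\<^sub>v z) \<bullet> x" by (rule transpose_vec_mult_scalar[OF S x z, symmetric])
  also have "\<dots> = x \<bullet> (S *\<^sub>v z)" unfolding St
    by (rule comm_scalar_prod[OF mult_mat_vec_carrier[OF S z] x])
  finally show ?thesis .
qed

lemma cs_sum: fixes a b :: "nat \<Rightarrow> real" assumes fin: "finite I"
  shows "(\<Sum>i\<in>I. a i * b i)^2 \<le> (\<Sum>i\<in>I. a i * a i) * (\<Sum>i\<in>I. b i * b i)"
proof (cases "(\<Sum>i\<in>I. b i * b i) = 0")
  case True
  then have "\<forall>i\<in>I. b i * b i = 0" using sum_nonneg_eq_0_iff[OF fin, of "\<lambda>i. b i * b i"] by simp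
  then have "\<forall>i\<in>I. b i = 0" by simp
  then show ?thesis by simp
next
  case False
  define A where "A = (\<Sum>i\<in>I. a i * a i)"
  define B where "B = (\<Sum>i\<in>I. b i * b i)"
  define S where "S = (\<Sum>i\<in>I. a i * b i)"
  have "B \<ge> 0" unfolding B_def by (intro sum_nonneg) simp
  then have Bpos: "B > 0" using False unfolding B_def by linarith
  define t where "t = S / B"
  have "0 \<le> (\<Sum>i\<in>I. (a i - t * b i) * (a i - t * b i))" by (auto intro: sum_nonneg)
  also have "\<dots> = (\<Sum>i\<in>I. a i * a i - 2 * t * (a i * b i) + t * t * (b i * b i))"
    by (rule sum.cong) (auto simp: algebra_simps)
  also have "\<dots> = A - 2 * t * S + t * t * B"
    unfolding A_def B_def S_def by (simp add: sum.distrib sum_subtractf sum_distrib_left)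
  also have "\<dots> = A - S * S / B" unfolding t_def using Bpos by (simp add: field_simps)
  finally have "S * S \<le> A * B" using Bpos by (simp add: field_simps)
  then show ?thesis unfolding A_def B_def S_def by (simp add: power2_eq_square)
qed

lemma cs_vec: assumes "x \<in> carrier_vec n" "z \<in> carrier_vec n"
  shows "(x \<bullet> z)^2 \<le> (x \<bullet> x) * ((z :: real vec) \<bullet> z)"
  using cs_sum[of "{0..<n}" "\<lambda>i. x $ i" "\<lambda>i. z $ i"] assms by (simp add: scalar_prod_def)

lemma pow_mat_vec_funpow: assumes S: "S \<in> carrier_mat n n" and a: "a \<in> carrier_vec n"
  shows "(S ^\<^sub>m k) *\<^sub>v a = ((\<lambda>v. S *\<^sub>v v) ^^ k) a"
  using a
proof (induct k arbitrary: a)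
  case 0 then show ?case using S by (simp add: carrier_matD)
next
  case (Suc k)
  have "(S ^\<^sub>m Suc k) *\<^sub>v a = (S ^\<^sub>m k * S) *\<^sub>v a" by simp
  also have "\<dots> = (S ^\<^sub>m k) *\<^sub>v (S *\<^sub>v a)" using S Suc.prems by (auto intro!: assoc_mult_mat_vec)
  also have "\<dots> = ((\<lambda>v. S *\<^sub>v v) ^^ k) (S *\<^sub>v a)" using Suc S by auto
  finally show ?case by (simp add: funpow_Suc_right del: funpow.simps)
qed

lemma funpow_carrier: assumes S: "S \<in> carrier_mat n n" and a: "a \<in> carrier_vec n"
  shows "((\<lambda>v. S *\<^sub>v v) ^^ k) a \<in> carrier_vec n"
  by (induct k) (use S a in auto)

lemma logconv: assumes S: "S \<in> carrier_mat n n" and St: "transpose_mat S = S"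
  and a: "a \<in> carrier_vec n" and y0: "a \<bullet> a > 0"
  shows "((\<lambda>v. S *\<^sub>v v) ^^ k) a \<bullet> ((\<lambda>v. S *\<^sub>v v) ^^ k) a
     \<ge> ((S *\<^sub>v a) \<bullet> (S *\<^sub>v a) / (a \<bullet> a))^k * (a \<bullet> (a :: real vec))"
proof -
  define x where "x k = ((\<lambda>v. S *\<^sub>v v) ^^ k) a" for k
  define y where "y k = x k \<bullet> x k" for k
  define p where "p = y 1 / y 0"
  have xc: "x k \<in> carrier_vec n" for k unfolding x_def by (rule funpow_carrier[OF S a])
  have xs: "x (Suc k) = S *\<^sub>v x k" for k unfolding x_def by simp
  have ynn: "y k \<ge> 0" for k unfolding y_def by (rule sq_real_nonneg)
  have y0p: "y 0 > 0" using y0 unfolding y_def x_def by simp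
  have key: "(y (Suc k))^2 \<le> y k * y (Suc (Suc k))" for k
  proof -
    have "y (Suc k) = x k \<bullet> x (Suc (Suc k))" unfolding y_def xs
      by (rule sym_scalar[OF S St xc mult_mat_vec_carrier[OF S xc]])
    then show ?thesis unfolding y_def using cs_vec[OF xc xc] by simp
  qed
  have step: "y (Suc k) \<ge> p * y k" for k
  proof (induct k)
    case 0 then show ?case unfolding p_def using y0p by simp
  next
    case (Suc k)
    show ?case
    proof (cases "y (Suc k) = 0")
      case True then show ?thesis using ynn by simp
    next
      case False
      then have pos1: "y (Suc k) > 0" using ynn less_eq_real_def by auto
      have posk: "y k > 0"
      proof (rule ccontr)
        assume "\<not> y k > 0"
        then have "y k = 0" using ynn[of k] by simp
        then have "x k = 0\<^sub>v n" using sq_real_eq0[OF xc] unfolding y_def by simp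
        then have "x (Suc k) = 0\<^sub>v n" unfolding xs using S by (auto intro!: eq_vecI simp: scalar_prod_def)
        then have "y (Suc k) = 0" unfolding y_def by simp
        then show False using False by simp
      qed
      have "p * y (Suc k) \<le> (y (Suc k) / y k) * y (Suc k)"
        using Suc posk pos1 by (intro mult_right_mono) (auto simp: field_simps)
      also have "\<dots> = (y (Suc k))^2 / y k" by (simp add: power2_eq_square)
      also have "\<dots> \<le> y (Suc (Suc k))" using key[of k] posk by (simp add: field_simps)
      finally show ?thesis .
    qed
  qed
  have pnn: "p \<ge> 0" unfolding p_def using ynn y0p by simp
  have "y k \<ge> p^k * y 0" for k
  proof (induct k)
    case (Suc k)
    have "p ^ Suc k * y 0 = p * (p^k * y 0)" by simp
    also have "\<dots> \<le> p * y k" using Suc pnn by (rule mult_left_mono)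
    also have "\<dots> \<le> y (Suc k)" by (rule step)
    finally show ?case .
  qed simp
  then show ?thesis unfolding y_def p_def x_def by simp
qed


lemma smult_mat_vec: assumes "A \<in> carrier_mat m n" "v \<in> carrier_vec n"
  shows "(k \<cdot>\<^sub>m A) *\<^sub>v v = k \<cdot>\<^sub>v (A *\<^sub>v (v :: 'a :: comm_ring_1 vec))"
  by (rule eq_vecI) (use assms in \<open>auto simp: scalar_prod_def sum_distrib_left algebra_simps\<close>)

lemma pow_smult: assumes A: "A \<in> carrier_mat n n"
  shows "(k \<cdot>\<^sub>m A) ^\<^sub>m j = (k ^ j) \<cdot>\<^sub>m (A ^\<^sub>m j :: 'a :: comm_ring_1 mat)"
proof (induct j)
  case 0 then show ?case using A by (auto intro!: eq_matI)
next
  case (Suc j)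
  have "(k \<cdot>\<^sub>m A) ^\<^sub>m Suc j = ((k ^ j) \<cdot>\<^sub>m (A ^\<^sub>m j)) * (k \<cdot>\<^sub>m A)" using Suc by simp
  also have "\<dots> = (k ^ j) \<cdot>\<^sub>m ((A ^\<^sub>m j) * (k \<cdot>\<^sub>m A))"
  proof -
    have Ak: "k \<cdot>\<^sub>m A \<in> carrier_mat n n" using A by simp
    show ?thesis by (rule mult_smult_assoc_mat[OF pow_carrier_mat[OF A] Ak])
  qed
  also have "(A ^\<^sub>m j) * (k \<cdot>\<^sub>m A) = k \<cdot>\<^sub>m (A ^\<^sub>m j * A)"
    by (rule mult_smult_distrib[OF pow_carrier_mat[OF A] A])
  finally show ?case by (auto intro!: eq_matI)
qed

lemma realness: assumes S: "S \<in> carrier_mat n n" and St: "transpose_mat S = S"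
  and ev: "eigenvalue (map_mat complex_of_real S) l"
  shows "Im l = 0 \<and> eigenvalue S (Re l)"
proof -
  from ev obtain v where evv: "eigenvector (map_mat complex_of_real S) v l" unfolding eigenvalue_def by auto
  have v: "v \<in> carrier_vec n" and nz: "v \<noteq> 0\<^sub>v n" and Sv: "map_mat complex_of_real S *\<^sub>v v = l \<cdot>\<^sub>v v"
    using evv S unfolding eigenvector_def by auto
  define x where "x = rv v"
  define y where "y = iv v"
  define a where "a = Re l"
  define b where "b = Im l"
  have x: "x \<in> carrier_vec n" and y: "y \<in> carrier_vec n" unfolding x_def y_def using v by auto
  have Sx: "S *\<^sub>v x = a \<cdot>\<^sub>v x - b \<cdot>\<^sub>v y"
  proof (rule eq_vecI)
    fix i assume "i < dim_vec (a \<cdot>\<^sub>v x - b \<cdot>\<^sub>v y)"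
    then have i: "i < n" using y by simp
    have "(S *\<^sub>v x) $ i = rv (map_mat complex_of_real S *\<^sub>v v) $ i" unfolding x_def rv_mult[OF S v] ..
    also have "\<dots> = Re ((l \<cdot>\<^sub>v v) $ i)" unfolding Sv using i v by simp
    finally show "(S *\<^sub>v x) $ i = (a \<cdot>\<^sub>v x - b \<cdot>\<^sub>v y) $ i" using i v x y unfolding x_def y_def a_def b_def by simp
  qed (use S y in simp)
  have Sy: "S *\<^sub>v y = a \<cdot>\<^sub>v y + b \<cdot>\<^sub>v x"
  proof (rule eq_vecI)
    fix i assume "i < dim_vec (a \<cdot>\<^sub>v y + b \<cdot>\<^sub>v x)"
    then have i: "i < n" using x by simp
    have "(S *\<^sub>v y) $ i = iv (map_mat complex_of_real S *\<^sub>v v) $ i" unfolding y_def rv_mult[OF S v] ..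
    also have "\<dots> = Im ((l \<cdot>\<^sub>v v) $ i)" unfolding Sv using i v by simp
    finally show "(S *\<^sub>v y) $ i = (a \<cdot>\<^sub>v y + b \<cdot>\<^sub>v x) $ i" using i v x y unfolding x_def y_def a_def b_def by (simp add: algebra_simps)
  qed (use S x in simp)
  have e1: "(S *\<^sub>v x) \<bullet> y = a * (x \<bullet> y) - b * (y \<bullet> y)"
    unfolding Sx using x y by (simp add: scalar_prod_def sum_subtractf sum_distrib_left algebra_simps)
  have e2: "x \<bullet> (S *\<^sub>v y) = a * (x \<bullet> y) + b * (x \<bullet> x)"
    unfolding Sy using x y by (simp add: scalar_prod_def sum.distrib sum_distrib_left algebra_simps)
  have "b * (x \<bullet> x + y \<bullet> y) = 0" using sym_scalar[OF S St x y] e1 e2 by (simp add: algebra_simps)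
  moreover have "x \<bullet> x + y \<bullet> y > 0" using sqn_pos[OF v nz] sqn_split[of v] unfolding x_def y_def by simp
  ultimately have b0: "b = 0" by simp
  have Sx': "S *\<^sub>v x = a \<cdot>\<^sub>v x" unfolding Sx b0 using x y by (auto intro!: eq_vecI)
  have Sy': "S *\<^sub>v y = a \<cdot>\<^sub>v y" unfolding Sy b0 using x y by (auto intro!: eq_vecI)
  have "x \<noteq> 0\<^sub>v n \<or> y \<noteq> 0\<^sub>v n" using vec_zero_iff_rv_iv[OF v] nz unfolding x_def y_def by simp
  then have "eigenvalue S a"
    unfolding eigenvalue_def eigenvector_def using Sx' Sy' x y S by (auto simp: carrier_matD)
  then show ?thesis using b0 unfolding a_def b_def by simp
qed

lemma pow_bound: assumes S: "S \<in> carrier_mat n n" and n: "n > 0" and r: "r > 0"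
  and ev: "\<And>l. eigenvalue (map_mat complex_of_real S) l \<Longrightarrow> cmod l < r"
  shows "\<exists>c. \<forall>k i j. i < n \<longrightarrow> j < n \<longrightarrow> \<bar>(S ^\<^sub>m k) $$ (i,j)\<bar> \<le> c * r ^ k"
proof -
  define Sc where "Sc = map_mat complex_of_real S"
  define A where "A = complex_of_real (1 / r) \<cdot>\<^sub>m Sc"
  have Sc: "Sc \<in> carrier_mat n n" unfolding Sc_def using S by simp
  have A: "A \<in> carrier_mat n n" unfolding A_def using Sc by simp
  have "spectral_radius A < 1"
  proof -
    from spectral_radius_mem_max(1)[OF A n] obtain l where l: "l \<in> spectrum A"
      and rho: "spectral_radius A = cmod l" by auto
    from l obtain v where evv: "eigenvector A v l" unfolding spectrum_def eigenvalue_def by auto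
    have v: "v \<in> carrier_vec n" and nz: "v \<noteq> 0\<^sub>v n" and Av: "A *\<^sub>v v = l \<cdot>\<^sub>v v"
      using evv A unfolding eigenvector_def by auto
    have "Sc *\<^sub>v v = (complex_of_real r * l) \<cdot>\<^sub>v v"
    proof -
      have "A *\<^sub>v v = complex_of_real (1 / r) \<cdot>\<^sub>v (Sc *\<^sub>v v)" unfolding A_def by (rule smult_mat_vec[OF Sc v])
      then have "complex_of_real r \<cdot>\<^sub>v (A *\<^sub>v v) = Sc *\<^sub>v v" using r
        by (auto intro!: eq_vecI simp: smult_smult_assoc)
      then show ?thesis unfolding Av by (auto simp: smult_smult_assoc)
    qed
    then have "eigenvalue Sc (complex_of_real r * l)"
      unfolding eigenvalue_def eigenvector_def using v nz Sc by (auto simp: carrier_matD)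
    then have "cmod (complex_of_real r * l) < r" using ev unfolding Sc_def by blast
    then have "r * cmod l < r * 1" using r by (simp add: norm_mult)
    then show ?thesis unfolding rho using r by simp
  qed
  from spectral_radius_jnf_norm_bound_less_1_upper_triangular[OF A this] obtain c where
    c: "\<And>k. norm_bound (A ^\<^sub>m k) c" by auto
  have "\<forall>k i j. i < n \<longrightarrow> j < n \<longrightarrow> \<bar>(S ^\<^sub>m k) $$ (i,j)\<bar> \<le> c * r ^ k"
  proof (intro allI impI)
    fix k i j assume i: "i < n" and j: "j < n"
    have "A ^\<^sub>m k = complex_of_real (1 / r) ^ k \<cdot>\<^sub>m (Sc ^\<^sub>m k)" unfolding A_def by (rule pow_smult[OF Sc])
    also have "Sc ^\<^sub>m k = map_mat complex_of_real (S ^\<^sub>m k)" unfolding Sc_def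
      by (rule of_real_hom.mat_hom_pow[OF S, symmetric])
    finally have "(A ^\<^sub>m k) $$ (i,j) = complex_of_real ((1/r)^k * (S ^\<^sub>m k) $$ (i,j))"
      using i j S by simp
    moreover have "cmod ((A ^\<^sub>m k) $$ (i,j)) \<le> c" using c[of k] i j A unfolding norm_bound_def by simp
    ultimately have "\<bar>(1/r)^k * (S ^\<^sub>m k) $$ (i,j)\<bar> \<le> c" by (simp only: norm_of_real)
    then have "(1/r)^k * \<bar>(S ^\<^sub>m k) $$ (i,j)\<bar> \<le> c" using r by (simp add: abs_mult)
    then show "\<bar>(S ^\<^sub>m k) $$ (i,j)\<bar> \<le> c * r ^ k" using r by (simp add: field_simps power_divide)
  qed
  then show ?thesis by blast
qed


lemma real_ev_exists: assumes S: "(S :: real mat) \<in> carrier_mat n n" and St: "transpose_mat S = S" and n: "n > 0"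
  shows "\<exists>m. eigenvalue S m"
proof -
  have Sc: "map_mat complex_of_real S \<in> carrier_mat n n" using S by simp
  from spectrum_non_empty[OF Sc n] obtain l where "eigenvalue (map_mat complex_of_real S) l"
    unfolding spectrum_def by auto
  from realness[OF S St this] show ?thesis by blast
qed

lemma mat_vec_entry_bound: assumes B: "(B :: real mat) \<in> carrier_mat n n" and a: "a \<in> carrier_vec n"
  and bd: "\<And>i j. i < n \<Longrightarrow> j < n \<Longrightarrow> \<bar>B $$ (i,j)\<bar> \<le> b" and i: "i < n"
  shows "\<bar>(B *\<^sub>v a) $ i\<bar> \<le> b * (\<Sum>j<n. \<bar>a $ j\<bar>)"
proof -
  have "(B *\<^sub>v a) $ i = (\<Sum>j<n. B $$ (i,j) * a $ j)"
    using B a i by (simp add: scalar_prod_def lessThan_atLeast0)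
  also have "\<bar>\<dots>\<bar> \<le> (\<Sum>j<n. \<bar>B $$ (i,j) * a $ j\<bar>)" by (rule sum_abs)
  also have "\<dots> \<le> (\<Sum>j<n. b * \<bar>a $ j\<bar>)"
    by (rule sum_mono) (use bd i in \<open>auto simp: abs_mult intro: mult_right_mono\<close>)
  also have "\<dots> = b * (\<Sum>j<n. \<bar>a $ j\<bar>)" by (simp add: sum_distrib_left)
  finally show ?thesis .
qed

lemma sq_bound: assumes v: "v \<in> carrier_vec n" and bd: "\<And>i. i < n \<Longrightarrow> \<bar>v $ i\<bar> \<le> B"
  shows "v \<bullet> (v :: real vec) \<le> real n * B^2"
proof -
  have "v \<bullet> v = (\<Sum>i<n. (v $ i)^2)" using v by (simp add: scalar_prod_def lessThan_atLeast0 power2_eq_square)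
  also have "\<dots> \<le> (\<Sum>i<n. B^2)"
  proof (rule sum_mono)
    fix i assume "i \<in> {..<n}"
    then have "\<bar>v $ i\<bar> \<le> B" using bd by simp
    then have "\<bar>v $ i\<bar>^2 \<le> B^2" by (rule power_mono) simp
    then show "(v $ i)^2 \<le> B^2" by simp
  qed
  finally show ?thesis by simp
qed

lemma norm_sym: assumes S: "(S :: real mat) \<in> carrier_mat n n" and St: "transpose_mat S = S" and n: "n > 0"
  and ev: "\<And>m. eigenvalue S m \<Longrightarrow> m^2 \<le> H"
  and a: "a \<in> carrier_vec n"
  shows "(S *\<^sub>v a) \<bullet> (S *\<^sub>v a) \<le> H * (a \<bullet> a)"
proof (rule ccontr)
  assume "\<not> ?thesis"
  then have gt: "(S *\<^sub>v a) \<bullet> (S *\<^sub>v a) > H * (a \<bullet> a)" by simp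
  from real_ev_exists[OF S St n] obtain m where "eigenvalue S m" by blast
  then have H0: "H \<ge> 0" using ev[of m] by (meson order_trans zero_le_power2)
  have aa: "a \<bullet> a > 0"
  proof (rule ccontr)
    assume "\<not> a \<bullet> a > 0"
    then have "a \<bullet> a = 0" using sq_real_nonneg[of a] by simp
    then have "a = 0\<^sub>v n" using sq_real_eq0[OF a] by simp
    then have "(S *\<^sub>v a) \<bullet> (S *\<^sub>v a) = 0" using S by (auto simp: scalar_prod_def)
    then show False using gt \<open>a \<bullet> a = 0\<close> by simp
  qed
  define p where "p = (S *\<^sub>v a) \<bullet> (S *\<^sub>v a) / (a \<bullet> a)"
  have pH: "p > H" unfolding p_def using gt aa by (simp add: field_simps)
  define r where "r = sqrt ((H + p) / 2)"
  have r2: "r^2 = (H + p) / 2" unfolding r_def using H0 pH by simp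
  have r0: "r > 0" unfolding r_def using H0 pH by simp
  have evr: "cmod l < r" if l: "eigenvalue (map_mat complex_of_real S) l" for l
  proof -
    from realness[OF S St l] have im: "Im l = 0" and e: "eigenvalue S (Re l)" by auto
    have "l = complex_of_real (Re l)" using im by (simp add: complex_eq_iff)
    then have cl: "cmod l = \<bar>Re l\<bar>" by (metis norm_of_real)
    have "\<bar>Re l\<bar>^2 < r^2" using ev[OF e] r2 pH by simp
    then have "\<bar>Re l\<bar> < r" using r0 by (rule power2_less_imp_less[OF _ less_imp_le])
    then show ?thesis using cl by simp
  qed
  from pow_bound[OF S n r0 evr] obtain c where
    c: "\<And>k i j. i < n \<Longrightarrow> j < n \<Longrightarrow> \<bar>(S ^\<^sub>m k) $$ (i,j)\<bar> \<le> c * r ^ k" by blast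
  define s where "s = (\<Sum>j<n. \<bar>a $ j\<bar>)"
  have upper: "((\<lambda>v. S *\<^sub>v v) ^^ k) a \<bullet> ((\<lambda>v. S *\<^sub>v v) ^^ k) a \<le> real n * (c * s)^2 * (r^2)^k" for k
  proof -
    have "\<bar>((S ^\<^sub>m k) *\<^sub>v a) $ i\<bar> \<le> (c * r^k) * s" if i: "i < n" for i
      unfolding s_def by (rule mat_vec_entry_bound[OF pow_carrier_mat[OF S] a c i])
    then have "((S ^\<^sub>m k) *\<^sub>v a) \<bullet> ((S ^\<^sub>m k) *\<^sub>v a) \<le> real n * ((c * r^k) * s)^2"
      by (intro sq_bound) (use S a in \<open>auto intro: mult_mat_vec_carrier[OF pow_carrier_mat[OF S] a]\<close>)
    moreover have "((c * r^k) * s)^2 = (c * s)^2 * (r^2)^k"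
      by (simp add: power_mult_distrib power_mult[symmetric] mult.commute)
    ultimately show ?thesis unfolding pow_mat_vec_funpow[OF S a] by (simp add: mult.assoc)
  qed
  have lower: "((\<lambda>v. S *\<^sub>v v) ^^ k) a \<bullet> ((\<lambda>v. S *\<^sub>v v) ^^ k) a \<ge> p^k * (a \<bullet> a)" for k
    using logconv[OF S St a aa, of k] unfolding p_def .
  define q where "q = p / r^2"
  have q1: "q > 1" unfolding q_def using r2 pH r0 by (simp add: field_simps)
  define K where "K = real n * (c * s)^2 / (a \<bullet> a)"
  have "q ^ k \<le> K" for k
  proof -
    have "p^k * (a \<bullet> a) \<le> real n * (c * s)^2 * (r^2)^k" using lower[of k] upper[of k] by linarith
    then have "p^k / (r^2)^k \<le> real n * (c * s)^2 / (a \<bullet> a)" using aa r0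
      by (simp add: field_simps)
    then show ?thesis unfolding q_def K_def by (simp add: power_divide)
  qed
  moreover from real_arch_pow[OF q1] obtain k where "K < q ^ k" by blast
  ultimately show False by (meson not_le)
qed


lemma diag_mult: assumes X: "X \<in> carrier_mat n n"
  and Xe: "\<And>i j. i < n \<Longrightarrow> j < n \<Longrightarrow> X $$ (i,j) = (if i = j then x i else 0)"
  and u: "u \<in> carrier_vec n"
  shows "X *\<^sub>v u = vec n (\<lambda>i. x i * u $ i)"
proof (rule eq_vecI)
  fix i assume "i < dim_vec (vec n (\<lambda>i. x i * u $ i))"
  then have i: "i < n" by simp
  have "(X *\<^sub>v u) $ i = (\<Sum>j\<in>{0..<n}. (if i = j then x i else 0) * u $ j)"
    using X u i Xe by (simp add: scalar_prod_def)
  also have "\<dots> = (\<Sum>j\<in>{0..<n}. if i = j then x i * u $ j else 0)" by (rule sum.cong) auto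
  also have "\<dots> = x i * u $ i" using i by simp
  finally show "(X *\<^sub>v u) $ i = vec n (\<lambda>i. x i * u $ i) $ i" using i by simp
qed (use X in simp)

lemma smult_one_minus_mult: assumes A: "(A :: real mat) \<in> carrier_mat n n" and v: "v \<in> carrier_vec n"
  shows "(k \<cdot>\<^sub>m 1\<^sub>m n - A) *\<^sub>v v = k \<cdot>\<^sub>v v - A *\<^sub>v v"
    "(k \<cdot>\<^sub>m 1\<^sub>m n + A) *\<^sub>v v = k \<cdot>\<^sub>v v + A *\<^sub>v v"
    "(A - k \<cdot>\<^sub>m 1\<^sub>m n) *\<^sub>v v = A *\<^sub>v v - k \<cdot>\<^sub>v v"
proof -
  have o: "(k \<cdot>\<^sub>m 1\<^sub>m n) *\<^sub>v v = k \<cdot>\<^sub>v v" using smult_mat_vec[OF one_carrier_mat v] v by simp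
  have c: "k \<cdot>\<^sub>m 1\<^sub>m n \<in> carrier_mat n n" by simp
  show "(k \<cdot>\<^sub>m 1\<^sub>m n - A) *\<^sub>v v = k \<cdot>\<^sub>v v - A *\<^sub>v v"
    unfolding minus_mult_distrib_mat_vec[OF c A v] o ..
  show "(k \<cdot>\<^sub>m 1\<^sub>m n + A) *\<^sub>v v = k \<cdot>\<^sub>v v + A *\<^sub>v v"
    unfolding add_mult_distrib_mat_vec[OF c A v] o ..
  show "(A - k \<cdot>\<^sub>m 1\<^sub>m n) *\<^sub>v v = A *\<^sub>v v - k \<cdot>\<^sub>v v"
    unfolding minus_mult_distrib_mat_vec[OF A c v] o ..
qed

lemma sq_sum: "x \<in> carrier_vec n \<Longrightarrow> x \<bullet> (x :: real vec) = (\<Sum>i<n. (x $ i)^2)"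
  by (simp add: scalar_prod_def lessThan_atLeast0 power2_eq_square)

lemma cross_alg: fixes A B TA TB :: "nat \<Rightarrow> real" and s :: real
  assumes s: "s * s = 1" and sym: "(\<Sum>i<M. TA i * B i) = (\<Sum>i<M. A i * TB i)"
  shows "(\<Sum>i<M. (w * A i + s * (TA i - B i))^2) + (\<Sum>i<M. (w * B i + s * (A i + TB i))^2)
    = (\<Sum>i<M. (w * A i + s * TA i)^2 + (A i)^2) + (\<Sum>i<M. (w * B i + s * TB i)^2 + (B i)^2)"
proof -
  have e: "(w * A i + s * (TA i - B i))^2 + (w * B i + s * (A i + TB i))^2
     = ((w * A i + s * TA i)^2 + (A i)^2) + ((w * B i + s * TB i)^2 + (B i)^2) + 2 * (A i * TB i - TA i * B i)" for i
  proof -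
    have "(w * A i + s * (TA i - B i))^2 + (w * B i + s * (A i + TB i))^2
      = (w * A i + s * TA i)^2 + (s*s) * (B i)^2 + (w * B i + s * TB i)^2 + (s*s) * (A i)^2
        + 2 * (s * s) * (A i * TB i - TA i * B i)"
      by (simp add: power2_eq_square algebra_simps)
    then show ?thesis using s by simp
  qed
  have "(\<Sum>i<M. (w * A i + s * (TA i - B i))^2) + (\<Sum>i<M. (w * B i + s * (A i + TB i))^2)
    = (\<Sum>i<M. (w * A i + s * (TA i - B i))^2 + (w * B i + s * (A i + TB i))^2)" by (simp add: sum.distrib)
  also have "\<dots> = (\<Sum>i<M. ((w * A i + s * TA i)^2 + (A i)^2) + ((w * B i + s * TB i)^2 + (B i)^2)
      + 2 * (A i * TB i - TA i * B i))" using e by simp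
  also have "\<dots> = (\<Sum>i<M. (w * A i + s * TA i)^2 + (A i)^2) + (\<Sum>i<M. (w * B i + s * TB i)^2 + (B i)^2)
      + 2 * ((\<Sum>i<M. A i * TB i) - (\<Sum>i<M. TA i * B i))"
    by (simp add: sum.distrib sum_subtractf sum_distrib_left)
  finally show ?thesis using sym by simp
qed

lemma inj_inv: assumes A: "(A :: real mat) \<in> carrier_mat n n"
  and inj: "\<And>v. v \<in> carrier_vec n \<Longrightarrow> A *\<^sub>v v = 0\<^sub>v n \<Longrightarrow> v = 0\<^sub>v n"
  shows "invertible_mat A \<and> inv_mat A \<in> carrier_mat n n \<and> A * inv_mat A = 1\<^sub>m n \<and> inv_mat A * A = 1\<^sub>m n"
proof -
  have "det A \<noteq> 0" using det_0_iff_vec_prod_zero[OF A] inj by blast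
  from det_non_zero_imp_unit[OF A this, of "()"]
  obtain B where B: "B \<in> carrier_mat n n" "B * A = 1\<^sub>m n" "A * B = 1\<^sub>m n"
    unfolding Units_def by (auto simp: ring_mat_simps)
  have dA: "dim_row A = n" using A by simp
  have ex: "\<exists>B. B \<in> carrier_mat (dim_row A) (dim_row A) \<and> A * B = 1\<^sub>m (dim_row A) \<and> B * A = 1\<^sub>m (dim_row A)"
    using B dA by blast
  from someI_ex[OF ex] have I: "inv_mat A \<in> carrier_mat n n" "A * inv_mat A = 1\<^sub>m n" "inv_mat A * A = 1\<^sub>m n"
    unfolding inv_mat_def dA by auto
  have "invertible_mat A" unfolding invertible_mat_def inverts_mat_def
    using A B by (auto simp: square_mat.simps intro!: exI[of _ B])
  then show ?thesis using I by blast
qed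

lemma vec_arith1: assumes "a \<in> carrier_vec n" "b \<in> carrier_vec n" "c \<in> carrier_vec n"
  shows "a + (b - c) - b = a - (c :: real vec)"
  by (rule eq_vecI) (use assms in auto)

lemma mult_mat_vec_smult_right: assumes "A \<in> carrier_mat m n" "v \<in> carrier_vec n"
  shows "A *\<^sub>v (k \<cdot>\<^sub>v v) = k \<cdot>\<^sub>v (A *\<^sub>v (v :: 'a :: comm_ring_1 vec))"
  by (rule eq_vecI) (use assms in \<open>auto simp: scalar_prod_def sum_distrib_left algebra_simps\<close>)

locale prob =
  fixes T D :: "real mat" and M :: nat and \<omega> :: real
  assumes M0: "M > 0"
    and spd: "spd_mat M T"
    and Dc: "D \<in> carrier_mat M M" and Ddiag: "diagonal_mat D" and Dneg: "\<forall>i < M. D $$ (i, i) \<le> 0"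
    and w0: "\<omega> > 0"
begin

lemma Tc: "T \<in> carrier_mat M M" and Tsym: "transpose_mat T = T"
  and Tpos: "\<And>x. x \<in> carrier_vec M \<Longrightarrow> x \<noteq> 0\<^sub>v M \<Longrightarrow> x \<bullet> (T *\<^sub>v x) > 0"
  using spd unfolding spd_mat_def by auto

lemma dimD[simp]: "dim_row D = M" "dim_col D = M" using Dc by auto
lemma dimT[simp]: "dim_row T = M" "dim_col T = M" using Tc by auto

definition dd :: "nat \<Rightarrow> real" where "dd i = (if i < M then D $$ (i,i) else D $$ (i - M, i - M))"

definition Bp where "Bp = \<omega> \<cdot>\<^sub>m 1\<^sub>m (2 * M) + Bblk D"
definition Bm where "Bm = \<omega> \<cdot>\<^sub>m 1\<^sub>m (2 * M) - Bblk D"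
definition Hp where "Hp = \<omega> \<cdot>\<^sub>m 1\<^sub>m (2 * M) + Hblk T"
definition Hm where "Hm = \<omega> \<cdot>\<^sub>m 1\<^sub>m (2 * M) - Hblk T"

lemma Bblk_c: "Bblk D \<in> carrier_mat (2*M) (2*M)" unfolding Bblk_def using Dc by (auto simp: mult_2)
lemma Hblk_c: "Hblk T \<in> carrier_mat (2*M) (2*M)" unfolding Hblk_def using Tc by (auto simp: mult_2)
lemma carriers: "Bp \<in> carrier_mat (2*M) (2*M)" "Bm \<in> carrier_mat (2*M) (2*M)"
  "Hp \<in> carrier_mat (2*M) (2*M)" "Hm \<in> carrier_mat (2*M) (2*M)"
  unfolding Bp_def Bm_def Hp_def Hm_def using Bblk_c Hblk_c by auto

lemma Bblk_entry: assumes i: "i < 2*M" and j: "j < 2*M"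
  shows "Bblk D $$ (i,j) = (if i = j then - dd i else 0)"
proof -
  have d: "\<And>i j. i < M \<Longrightarrow> j < M \<Longrightarrow> i \<noteq> j \<Longrightarrow> D $$ (i,j) = 0" using Ddiag unfolding diagonal_mat_def by simp
  show ?thesis unfolding Bblk_def dd_def using i j d by (auto simp: mult_2)
qed

lemma Bp_mult: "u \<in> carrier_vec (2*M) \<Longrightarrow> Bp *\<^sub>v u = vec (2*M) (\<lambda>i. (\<omega> - dd i) * u $ i)"
  by (rule diag_mult[OF carriers(1)]) (auto simp: Bp_def Bblk_entry Bblk_c carrier_matD[OF Bblk_c])
lemma Bm_mult: "u \<in> carrier_vec (2*M) \<Longrightarrow> Bm *\<^sub>v u = vec (2*M) (\<lambda>i. (\<omega> + dd i) * u $ i)"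
  by (rule diag_mult[OF carriers(2)]) (auto simp: Bm_def Bblk_entry Bblk_c carrier_matD[OF Bblk_c])

lemma dd_le: "i < 2 * M \<Longrightarrow> dd i \<le> 0" using Dneg unfolding dd_def by auto

lemma dd_ev: "i < 2 * M \<Longrightarrow> eigenvalue D (dd i)"
proof -
  assume i: "i < 2 * M"
  define k where "k = (if i < M then i else i - M)"
  have k: "k < M" and ddk: "dd i = D $$ (k,k)" using i unfolding k_def dd_def by auto
  have d: "\<And>i j. i < M \<Longrightarrow> j < M \<Longrightarrow> D $$ (i,j) = (if i = j then D $$ (i,i) else 0)" 
    using Ddiag unfolding diagonal_mat_def by auto
  have "D *\<^sub>v unit_vec M k = vec M (\<lambda>j. D $$ (j,j) * unit_vec M k $ j)"
    by (rule diag_mult[OF Dc d]) auto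
  also have "\<dots> = D $$ (k,k) \<cdot>\<^sub>v unit_vec M k" by (rule eq_vecI) (auto simp: k)
  finally have "D *\<^sub>v unit_vec M k = D $$ (k,k) \<cdot>\<^sub>v unit_vec M k" .
  moreover have "(unit_vec M k :: real vec) \<noteq> 0\<^sub>v M"
  proof
    assume h: "(unit_vec M k :: real vec) = 0\<^sub>v M"
    have "(unit_vec M k :: real vec) $ k = 1" using k by simp
    then show False using h k by simp
  qed
  moreover have "(unit_vec M k :: real vec) \<in> carrier_vec M" by simp
  ultimately show "eigenvalue D (dd i)" unfolding ddk eigenvalue_def eigenvector_def by (auto intro!: exI[of _ "unit_vec M k"])
qed

lemma evD_le0: assumes "eigenvalue D l" shows "l \<le> 0"
proof -
  from assms obtain v where v: "v \<in> carrier_vec M" and nz: "v \<noteq> 0\<^sub>v M" and Dv: "D *\<^sub>v v = l \<cdot>\<^sub>v v"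
    unfolding eigenvalue_def eigenvector_def by auto
  have "\<exists>k<M. v $ k \<noteq> 0"
  proof (rule ccontr)
    assume "\<not> (\<exists>k<M. v $ k \<noteq> 0)"
    then have "v = 0\<^sub>v M" using v by (auto intro!: eq_vecI)
    then show False using nz by simp
  qed
  then obtain k where k: "k < M" and vk: "v $ k \<noteq> 0" by blast
  have d: "\<And>i j. i < M \<Longrightarrow> j < M \<Longrightarrow> D $$ (i,j) = (if i = j then D $$ (i,i) else 0)" 
    using Ddiag unfolding diagonal_mat_def by auto
  have "D *\<^sub>v v = vec M (\<lambda>j. D $$ (j,j) * v $ j)" by (rule diag_mult[OF Dc d v])
  then have "(l \<cdot>\<^sub>v v) $ k = D $$ (k,k) * v $ k" using Dv k by simp
  then have "l * v $ k = D $$ (k,k) * v $ k" using k v by simp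
  then have "l = D $$ (k,k)" using vk by auto
  then show ?thesis using Dneg k by simp
qed


lemma Hblk_append: assumes a: "a \<in> carrier_vec M" and b: "b \<in> carrier_vec M"
  shows "Hblk T *\<^sub>v (a @\<^sub>v b) = (T *\<^sub>v a - b) @\<^sub>v (a + T *\<^sub>v b)"
proof -
  have "Hblk T *\<^sub>v (a @\<^sub>v b) = (T *\<^sub>v a + (- 1\<^sub>m M) *\<^sub>v b) @\<^sub>v (1\<^sub>m M *\<^sub>v a + T *\<^sub>v b)"
    unfolding Hblk_def dimT by (rule four_block_mat_mult_vec[OF Tc _ _ Tc a b]) (auto intro: uminus_carrier_mat)
  also have "(- 1\<^sub>m M) *\<^sub>v b = - b" using b by simp
  also have "T *\<^sub>v a + - b = T *\<^sub>v a - b" using a b by (auto intro!: eq_vecI)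
  also have "1\<^sub>m M *\<^sub>v a = a" using a by simp
  finally show ?thesis .
qed

lemma H_split: assumes u: "u \<in> carrier_vec (2*M)"
  shows "Hm *\<^sub>v u = (\<omega> \<cdot>\<^sub>v vec_first u M - (T *\<^sub>v vec_first u M - vec_last u M)) @\<^sub>v
                    (\<omega> \<cdot>\<^sub>v vec_last u M - (vec_first u M + T *\<^sub>v vec_last u M))"
    "Hp *\<^sub>v u = (\<omega> \<cdot>\<^sub>v vec_first u M + (T *\<^sub>v vec_first u M - vec_last u M)) @\<^sub>v
                    (\<omega> \<cdot>\<^sub>v vec_last u M + (vec_first u M + T *\<^sub>v vec_last u M))"
proof -
  define a where "a = vec_first u M"
  define b where "b = vec_last u M"
  have a: "a \<in> carrier_vec M" and b: "b \<in> carrier_vec M" unfolding a_def b_def by auto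
  have uab: "u = a @\<^sub>v b" unfolding a_def b_def using u by (simp add: mult_2)
  have Hu: "Hblk T *\<^sub>v u = (T *\<^sub>v a - b) @\<^sub>v (a + T *\<^sub>v b)" unfolding uab by (rule Hblk_append[OF a b])
  have Ta: "T *\<^sub>v a \<in> carrier_vec M" and Tb: "T *\<^sub>v b \<in> carrier_vec M" using Tc a b by auto
  show "Hm *\<^sub>v u = (\<omega> \<cdot>\<^sub>v a - (T *\<^sub>v a - b)) @\<^sub>v (\<omega> \<cdot>\<^sub>v b - (a + T *\<^sub>v b))"
    unfolding Hm_def smult_one_minus_mult(1)[OF Hblk_c u] Hu
    by (rule eq_vecI) (use a b Ta Tb uab in \<open>auto simp: mult_2\<close>)
  show "Hp *\<^sub>v u = (\<omega> \<cdot>\<^sub>v a + (T *\<^sub>v a - b)) @\<^sub>v (\<omega> \<cdot>\<^sub>v b + (a + T *\<^sub>v b))"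
    unfolding Hp_def smult_one_minus_mult(2)[OF Hblk_c u] Hu
    by (rule eq_vecI) (use a b Ta Tb uab in \<open>auto simp: mult_2\<close>)
qed

lemma H_norms: assumes u: "u \<in> carrier_vec (2*M)" and s: "s = 1 \<or> s = -1"
  and X: "X = (if s = 1 then Hp else Hm)"
  shows "(X *\<^sub>v u) \<bullet> (X *\<^sub>v u) =
    (\<Sum>i<M. (\<omega> * vec_first u M $ i + s * (T *\<^sub>v vec_first u M) $ i)^2 + (vec_first u M $ i)^2) +
    (\<Sum>i<M. (\<omega> * vec_last u M $ i + s * (T *\<^sub>v vec_last u M) $ i)^2 + (vec_last u M $ i)^2)"
proof -
  define a where "a = vec_first u M"
  define b where "b = vec_last u M"
  have a: "a \<in> carrier_vec M" and b: "b \<in> carrier_vec M" unfolding a_def b_def by auto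
  have Ta: "T *\<^sub>v a \<in> carrier_vec M" and Tb: "T *\<^sub>v b \<in> carrier_vec M" using Tc a b by auto
  define P where "P = vec M (\<lambda>i. \<omega> * a $ i + s * ((T *\<^sub>v a) $ i - b $ i))"
  define Q where "Q = vec M (\<lambda>i. \<omega> * b $ i + s * (a $ i + (T *\<^sub>v b) $ i))"
  have XPQ: "X *\<^sub>v u = P @\<^sub>v Q"
  proof (cases "s = 1")
    case True
    then show ?thesis unfolding X P_def Q_def using H_split(2)[OF u] a b Ta Tb
      unfolding a_def[symmetric] b_def[symmetric] by (auto intro!: eq_vecI)
  next
    case False
    then have s1: "s = -1" using s by simp
    then show ?thesis unfolding X P_def Q_def using H_split(1)[OF u] a b Ta Tb
      unfolding a_def[symmetric] b_def[symmetric] by (auto intro!: eq_vecI)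
  qed
  have "(X *\<^sub>v u) \<bullet> (X *\<^sub>v u) = P \<bullet> P + Q \<bullet> Q" unfolding XPQ
    by (rule scalar_prod_append) (auto simp: P_def Q_def)
  also have "\<dots> = (\<Sum>i<M. (\<omega> * a $ i + s * ((T *\<^sub>v a) $ i - b $ i))^2) +
     (\<Sum>i<M. (\<omega> * b $ i + s * (a $ i + (T *\<^sub>v b) $ i))^2)"
  proof -
    have Pc: "P \<in> carrier_vec M" and Qc: "Q \<in> carrier_vec M" unfolding P_def Q_def by auto
    show ?thesis unfolding sq_sum[OF Pc] sq_sum[OF Qc] unfolding P_def Q_def by simp
  qed
  also have "\<dots> = (\<Sum>i<M. (\<omega> * a $ i + s * (T *\<^sub>v a) $ i)^2 + (a $ i)^2) +
    (\<Sum>i<M. (\<omega> * b $ i + s * (T *\<^sub>v b) $ i)^2 + (b $ i)^2)"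
  proof (rule cross_alg)
    show "s * s = 1" using s by auto
    have "(T *\<^sub>v a) \<bullet> b = a \<bullet> (T *\<^sub>v b)" by (rule sym_scalar[OF Tc Tsym a b])
    then show "(\<Sum>i<M. (T *\<^sub>v a) $ i * b $ i) = (\<Sum>i<M. a $ i * (T *\<^sub>v b) $ i)"
      using a b Ta Tb by (simp add: scalar_prod_def lessThan_atLeast0)
  qed
  finally show ?thesis unfolding a_def b_def .
qed


lemma Tsym_entry: "i < M \<Longrightarrow> j < M \<Longrightarrow> T $$ (j,i) = T $$ (i,j)"
proof -
  assume i: "i < M" and j: "j < M"
  have "transpose_mat T $$ (i,j) = T $$ (j,i)" using i j by simp
  then show ?thesis unfolding Tsym by simp
qed

lemma evT_pos: assumes "eigenvalue T m" shows "m > 0"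
proof -
  from assms obtain v where v: "v \<in> carrier_vec M" and nz: "v \<noteq> 0\<^sub>v M" and Tv: "T *\<^sub>v v = m \<cdot>\<^sub>v v"
    unfolding eigenvalue_def eigenvector_def by auto
  have "v \<bullet> (T *\<^sub>v v) > 0" by (rule Tpos[OF v nz])
  also have "v \<bullet> (T *\<^sub>v v) = m * (v \<bullet> v)" unfolding Tv using v
    by (simp add: scalar_prod_def sum_distrib_left algebra_simps)
  finally have "m * (v \<bullet> v) > 0" .
  moreover have "v \<bullet> v \<ge> 0" by (rule sq_real_nonneg)
  ultimately show ?thesis by (simp add: zero_less_mult_iff)
qed

definition alpha where "alpha = Max ((\<lambda>l. \<bar>(\<omega> + l) / (\<omega> - l)\<bar>) ` {l. eigenvalue D l})"
definition beta where "beta = Max ((\<lambda>m. sqrt (((\<omega> - m)^2 + 1) / ((\<omega> + m)^2 + 1))) ` {m. eigenvalue T m})"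

lemma sigma_eq: "sigma \<omega> T D = alpha * beta" unfolding sigma_def alpha_def beta_def ..

lemma finD: "finite {l. eigenvalue D l}" using card_finite_spectrum(1)[OF Dc] unfolding spectrum_def by simp
lemma finT: "finite {l. eigenvalue T l}" using card_finite_spectrum(1)[OF Tc] unfolding spectrum_def by simp
lemma neD: "{l. eigenvalue D l} \<noteq> {}" using dd_ev[of 0] M0 by auto
lemma neT: "{l. eigenvalue T l} \<noteq> {}" using real_ev_exists[OF Tc Tsym M0] by auto

lemma alpha_ge: "i < 2 * M \<Longrightarrow> \<bar>(\<omega> + dd i) / (\<omega> - dd i)\<bar> \<le> alpha"
  unfolding alpha_def by (rule Max_ge) (use finD dd_ev in auto)

lemma alpha_le1: "alpha \<le> 1"
  unfolding alpha_def
proof (subst Max_le_iff)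
  show "\<forall>a\<in>(\<lambda>l. \<bar>(\<omega> + l) / (\<omega> - l)\<bar>) ` {l. eigenvalue D l}. a \<le> 1"
  proof
    fix a assume "a \<in> (\<lambda>l. \<bar>(\<omega> + l) / (\<omega> - l)\<bar>) ` {l. eigenvalue D l}"
    then obtain l where l: "eigenvalue D l" and a: "a = \<bar>(\<omega> + l) / (\<omega> - l)\<bar>" by auto
    have l0: "l \<le> 0" by (rule evD_le0[OF l])
    have p: "\<omega> - l > 0" using l0 w0 by simp
    have le: "\<bar>\<omega> + l\<bar> \<le> \<omega> - l" using l0 w0 by simp
    have "\<bar>(\<omega> + l) / (\<omega> - l)\<bar> = \<bar>\<omega> + l\<bar> / (\<omega> - l)" using p by (simp add: abs_divide)
    also have "\<dots> \<le> 1" using le p by (simp add: divide_le_eq_1_pos)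
    finally show "a \<le> 1" unfolding a .
  qed
qed (use finD neD in auto)

lemma alpha_ge0: "alpha \<ge> 0"
proof -
  have "\<bar>(\<omega> + dd 0) / (\<omega> - dd 0)\<bar> \<le> alpha" using alpha_ge[of 0] M0 by simp
  then show ?thesis by (rule order_trans[OF abs_ge_zero])
qed

lemma beta_ge: assumes "eigenvalue T m" shows "sqrt (((\<omega> - m)^2 + 1) / ((\<omega> + m)^2 + 1)) \<le> beta"
  unfolding beta_def by (rule Max_ge) (use finT assms in auto)

lemma beta_lt1: "beta < 1"
  unfolding beta_def
proof (subst Max_less_iff)
  show "\<forall>a\<in>(\<lambda>m. sqrt (((\<omega> - m)^2 + 1) / ((\<omega> + m)^2 + 1))) ` {m. eigenvalue T m}. a < 1"
  proof
    fix a assume "a \<in> (\<lambda>m. sqrt (((\<omega> - m)^2 + 1) / ((\<omega> + m)^2 + 1))) ` {m. eigenvalue T m}"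
    then obtain m where m: "eigenvalue T m" and a: "a = sqrt (((\<omega> - m)^2 + 1) / ((\<omega> + m)^2 + 1))" by auto
    have m0: "m > 0" by (rule evT_pos[OF m])
    have "(\<omega> - m)^2 + 1 < (\<omega> + m)^2 + 1" using m0 w0 by (simp add: power2_eq_square algebra_simps)
    moreover have den: "(\<omega> + m)^2 + 1 > 0" by (simp add: add_nonneg_pos)
    ultimately have "((\<omega> - m)^2 + 1) / ((\<omega> + m)^2 + 1) < 1" by (simp add: divide_less_eq)
    then show "a < 1" unfolding a by simp
  qed
qed (use finT neT in auto)

lemma beta_ge0: "beta \<ge> 0"
proof -
  obtain m where "eigenvalue T m" using neT by auto
  note b = beta_ge[OF this]
  have "0 \<le> sqrt (((\<omega> - m)^2 + 1) / ((\<omega> + m)^2 + 1))"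
    by (intro real_sqrt_ge_zero divide_nonneg_nonneg add_nonneg_nonneg) auto
  then show ?thesis using b by linarith
qed

lemma beta_ev: assumes m: "eigenvalue T m"
  shows "(\<omega> - m)^2 + 1 \<le> beta^2 * ((\<omega> + m)^2 + 1)"
proof -
  define f where "f = ((\<omega> - m)^2 + 1) / ((\<omega> + m)^2 + 1)"
  have den: "(\<omega> + m)^2 + 1 > 0" by (simp add: add_nonneg_pos)
  have "(\<omega> - m)^2 + 1 \<ge> 0" by (simp add: add_nonneg_nonneg)
  then have f0: "f \<ge> 0" unfolding f_def using den by (intro divide_nonneg_nonneg) auto
  have "sqrt f \<le> beta" unfolding f_def by (rule beta_ge[OF m])
  then have "(sqrt f)^2 \<le> beta^2" by (rule power_mono) (use f0 in simp)
  then have "f \<le> beta^2" using f0 by simp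
  then show ?thesis unfolding f_def using den by (simp add: field_simps)
qed

lemma sigma_lt1: "sigma \<omega> T D < 1"
proof -
  have "alpha * beta \<le> 1 * beta" using alpha_le1 beta_ge0 by (rule mult_right_mono)
  then show ?thesis unfolding sigma_eq using beta_lt1 by simp
qed

lemma sigma_ge0: "sigma \<omega> T D \<ge> 0" unfolding sigma_eq using alpha_ge0 beta_ge0 by simp


lemma K1: assumes u: "u \<in> carrier_vec (2*M)"
  shows "(Bm *\<^sub>v u) \<bullet> (Bm *\<^sub>v u) \<le> alpha^2 * ((Bp *\<^sub>v u) \<bullet> (Bp *\<^sub>v u))"
proof -
  have c1: "Bm *\<^sub>v u \<in> carrier_vec (2*M)" and c2: "Bp *\<^sub>v u \<in> carrier_vec (2*M)"
    using carriers u by auto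
  have "(Bm *\<^sub>v u) \<bullet> (Bm *\<^sub>v u) = (\<Sum>i<2*M. ((\<omega> + dd i) * u $ i)^2)"
    unfolding Bm_mult[OF u] by (subst sq_sum[of _ "2*M"]) auto
  also have "\<dots> \<le> (\<Sum>i<2*M. alpha^2 * ((\<omega> - dd i) * u $ i)^2)"
  proof (rule sum_mono)
    fix i assume "i \<in> {..<2*M}"
    then have i: "i < 2 * M" by simp
    have p: "\<omega> - dd i > 0" using dd_le[OF i] w0 by simp
    have "\<bar>\<omega> + dd i\<bar> = \<bar>(\<omega> + dd i) / (\<omega> - dd i)\<bar> * (\<omega> - dd i)" using p by (simp add: abs_divide)
    also have "\<dots> \<le> alpha * (\<omega> - dd i)" using alpha_ge[OF i] p by (intro mult_right_mono) auto
    finally have "\<bar>\<omega> + dd i\<bar> \<le> alpha * (\<omega> - dd i)" .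
    then have "\<bar>\<omega> + dd i\<bar>^2 \<le> (alpha * (\<omega> - dd i))^2" by (rule power_mono) simp
    then have "(\<omega> + dd i)^2 * (u $ i)^2 \<le> (alpha * (\<omega> - dd i))^2 * (u $ i)^2"
      by (simp add: mult_right_mono)
    then show "((\<omega> + dd i) * u $ i)^2 \<le> alpha^2 * ((\<omega> - dd i) * u $ i)^2"
      by (simp add: power_mult_distrib mult.assoc)
  qed
  also have "\<dots> = alpha^2 * (\<Sum>i<2*M. ((\<omega> - dd i) * u $ i)^2)" by (simp add: sum_distrib_left)
  also have "(\<Sum>i<2*M. ((\<omega> - dd i) * u $ i)^2) = (Bp *\<^sub>v u) \<bullet> (Bp *\<^sub>v u)"
    unfolding Bp_mult[OF u] by (subst sq_sum[of _ "2*M"]) auto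
  finally show ?thesis .
qed

lemma K2half: assumes a: "a \<in> carrier_vec M"
  shows "(\<Sum>i<M. (\<omega> * a $ i + (-1) * (T *\<^sub>v a) $ i)^2 + (a $ i)^2)
      \<le> beta^2 * (\<Sum>i<M. (\<omega> * a $ i + 1 * (T *\<^sub>v a) $ i)^2 + (a $ i)^2)"
proof -
  define c where "c = 1 - beta^2"
  have "beta * beta \<le> beta * 1" using beta_lt1 beta_ge0 by (intro mult_left_mono) auto
  then have c0: "c > 0" unfolding c_def using beta_lt1 by (simp add: power2_eq_square)
  define m where "m = \<omega> * (1 + beta^2) / c"
  have cm: "c * m = \<omega> * (1 + beta^2)" unfolding m_def using c0 by simp
  define H where "H = m^2 - \<omega>^2 - 1"
  define S where "S = T - m \<cdot>\<^sub>m 1\<^sub>m M"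
  have Sc: "S \<in> carrier_mat M M" unfolding S_def by (rule minus_carrier_mat) simp
  have Ssym: "transpose_mat S = S"
    by (rule eq_matI) (use Tc Tsym_entry in \<open>auto simp: S_def\<close>)
  have Sv: "S *\<^sub>v v = T *\<^sub>v v - m \<cdot>\<^sub>v v" if v: "v \<in> carrier_vec M" for v
    unfolding S_def by (rule smult_one_minus_mult(3)[OF Tc v])
  have evS: "l^2 \<le> H" if l: "eigenvalue S l" for l
  proof -
    from l obtain v where v: "v \<in> carrier_vec M" and nz: "v \<noteq> 0\<^sub>v M" and ev: "S *\<^sub>v v = l \<cdot>\<^sub>v v"
      unfolding eigenvalue_def eigenvector_def using Sc by auto
    have "T *\<^sub>v v = (l + m) \<cdot>\<^sub>v v"
    proof (rule eq_vecI)
      fix i assume "i < dim_vec ((l + m) \<cdot>\<^sub>v v)"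
      then have i: "i < M" using v by simp
      have "(S *\<^sub>v v) $ i = (l \<cdot>\<^sub>v v) $ i" using ev by simp
      then have "(T *\<^sub>v v) $ i - m * v $ i = l * v $ i" unfolding Sv[OF v] using i v Tc by simp
      then show "(T *\<^sub>v v) $ i = ((l + m) \<cdot>\<^sub>v v) $ i" using i v by (simp add: algebra_simps)
    qed (use Tc v in simp)
    then have "eigenvalue T (l + m)" unfolding eigenvalue_def eigenvector_def using v nz by auto
    from beta_ev[OF this] have b: "(\<omega> - (l + m))^2 + 1 \<le> beta^2 * ((\<omega> + (l + m))^2 + 1)" .
    define \<mu> where "\<mu> = l + m"
    have "c * (l^2 - H) = c * \<mu>^2 - 2 * (c * m) * \<mu> + c * (\<omega>^2 + 1)"
      unfolding H_def \<mu>_def by (simp add: power2_eq_square algebra_simps)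
    also have "\<dots> = c * \<mu>^2 - 2 * (\<omega> * (1 + beta^2)) * \<mu> + c * (\<omega>^2 + 1)" unfolding cm ..
    also have "\<dots> = (\<omega> - \<mu>)^2 + 1 - beta^2 * ((\<omega> + \<mu>)^2 + 1)"
      unfolding c_def by (simp add: power2_eq_square algebra_simps)
    also have "\<dots> \<le> 0" using b unfolding \<mu>_def by simp
    finally have "c * (l^2 - H) \<le> 0" .
    then have "l^2 - H \<le> 0" using c0 by (simp add: mult_le_0_iff)
    then show ?thesis by simp
  qed
  have nS: "(S *\<^sub>v a) \<bullet> (S *\<^sub>v a) \<le> H * (a \<bullet> a)" by (rule norm_sym[OF Sc Ssym M0 evS a])
  have Ta: "T *\<^sub>v a \<in> carrier_vec M" using Tc a by simp
  define X where "X = (\<Sum>i<M. (a $ i)^2)"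
  define Y where "Y = (\<Sum>i<M. a $ i * (T *\<^sub>v a) $ i)"
  define Z where "Z = (\<Sum>i<M. ((T *\<^sub>v a) $ i)^2)"
  have Sa: "S *\<^sub>v a \<in> carrier_vec M" using Sc a by simp
  have "(S *\<^sub>v a) \<bullet> (S *\<^sub>v a) = (\<Sum>i<M. ((T *\<^sub>v a) $ i - m * a $ i)^2)"
    unfolding Sv[OF a] by (subst sq_sum[of _ M]) (use a Ta in auto)
  also have "\<dots> = Z - 2 * m * Y + m^2 * X" unfolding X_def Y_def Z_def
    by (simp add: power2_eq_square algebra_simps sum.distrib sum_subtractf sum_distrib_left)
  finally have h: "Z - 2 * m * Y + m^2 * X \<le> H * X" using nS sq_sum[OF a] unfolding X_def by simp
  have e2: "(\<Sum>i<M. (\<omega> * a $ i + (-1) * (T *\<^sub>v a) $ i)^2 + (a $ i)^2) = (\<omega>^2 + 1) * X - 2 * \<omega> * Y + Z"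
    unfolding X_def Y_def Z_def
    by (simp add: power2_eq_square algebra_simps sum.distrib sum_subtractf sum_distrib_left)
  have e3: "(\<Sum>i<M. (\<omega> * a $ i + 1 * (T *\<^sub>v a) $ i)^2 + (a $ i)^2) = (\<omega>^2 + 1) * X + 2 * \<omega> * Y + Z"
    unfolding X_def Y_def Z_def
    by (simp add: power2_eq_square algebra_simps sum.distrib sum_subtractf sum_distrib_left)
  have h2: "Z - 2 * m * Y + (\<omega>^2 + 1) * X \<le> 0" using h unfolding H_def by (simp add: algebra_simps)
  have "c * (Z - 2 * m * Y + (\<omega>^2 + 1) * X) \<le> 0" using c0 h2 by (simp add: mult_le_0_iff)
  moreover have "c * (Z - 2 * m * Y + (\<omega>^2 + 1) * X) = c * Z - 2 * (c * m) * Y + c * (\<omega>^2 + 1) * X"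
    by (simp add: algebra_simps)
  moreover have "beta^2 * ((\<omega>^2 + 1) * X + 2 * \<omega> * Y + Z) - ((\<omega>^2 + 1) * X - 2 * \<omega> * Y + Z)
      = - (c * Z - 2 * (\<omega> * (1 + beta^2)) * Y + c * (\<omega>^2 + 1) * X)"
    unfolding c_def by (simp add: algebra_simps)
  ultimately show ?thesis unfolding e2 e3 cm by linarith
qed

lemma K2: assumes u: "u \<in> carrier_vec (2*M)"
  shows "(Hm *\<^sub>v u) \<bullet> (Hm *\<^sub>v u) \<le> beta^2 * ((Hp *\<^sub>v u) \<bullet> (Hp *\<^sub>v u))"
proof -
  have m: "(Hm *\<^sub>v u) \<bullet> (Hm *\<^sub>v u) =
    (\<Sum>i<M. (\<omega> * vec_first u M $ i + (-1) * (T *\<^sub>v vec_first u M) $ i)^2 + (vec_first u M $ i)^2) +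
    (\<Sum>i<M. (\<omega> * vec_last u M $ i + (-1) * (T *\<^sub>v vec_last u M) $ i)^2 + (vec_last u M $ i)^2)"
    by (rule H_norms[OF u]) auto
  have p: "(Hp *\<^sub>v u) \<bullet> (Hp *\<^sub>v u) =
    (\<Sum>i<M. (\<omega> * vec_first u M $ i + 1 * (T *\<^sub>v vec_first u M) $ i)^2 + (vec_first u M $ i)^2) +
    (\<Sum>i<M. (\<omega> * vec_last u M $ i + 1 * (T *\<^sub>v vec_last u M) $ i)^2 + (vec_last u M $ i)^2)"
    by (rule H_norms[OF u]) auto
  show ?thesis unfolding m p using K2half[of "vec_first u M"] K2half[of "vec_last u M"]
    by (simp add: distrib_left)
qed


lemma Bp_inj: assumes v: "v \<in> carrier_vec (2*M)" and z: "Bp *\<^sub>v v = 0\<^sub>v (2*M)" shows "v = 0\<^sub>v (2*M)"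
proof (rule eq_vecI)
  fix i assume "i < dim_vec (0\<^sub>v (2*M) :: real vec)"
  then have i: "i < 2*M" by simp
  have "(Bp *\<^sub>v v) $ i = 0" using z i by simp
  then have "(\<omega> - dd i) * v $ i = 0" unfolding Bp_mult[OF v] using i by simp
  moreover have "\<omega> - dd i > 0" using dd_le[OF i] w0 by simp
  ultimately show "v $ i = 0\<^sub>v (2*M) $ i" using i by simp
qed (use v in simp)

lemma Hp_inj: assumes v: "v \<in> carrier_vec (2*M)" and z: "Hp *\<^sub>v v = 0\<^sub>v (2*M)" shows "v = 0\<^sub>v (2*M)"
proof -
  define a where "a = vec_first v M"
  define b where "b = vec_last v M"
  have n: "(\<Sum>i<M. (\<omega> * a $ i + 1 * (T *\<^sub>v a) $ i)^2 + (a $ i)^2) +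
    (\<Sum>i<M. (\<omega> * b $ i + 1 * (T *\<^sub>v b) $ i)^2 + (b $ i)^2) = 0"
    using H_norms[OF v, of 1 Hp] z unfolding a_def b_def by simp
  define FA where "FA i = (\<omega> * a $ i + 1 * (T *\<^sub>v a) $ i)^2 + (a $ i)^2" for i
  define FB where "FB i = (\<omega> * b $ i + 1 * (T *\<^sub>v b) $ i)^2 + (b $ i)^2" for i
  have FA0: "\<And>i. FA i \<ge> 0" unfolding FA_def by (intro add_nonneg_nonneg) auto
  have FB0: "\<And>i. FB i \<ge> 0" unfolding FB_def by (intro add_nonneg_nonneg) auto
  have SA0: "sum FA {..<M} \<ge> 0" by (intro sum_nonneg FA0)
  have SB0: "sum FB {..<M} \<ge> 0" by (intro sum_nonneg FB0)
  have "sum FA {..<M} + sum FB {..<M} = 0" using n unfolding FA_def FB_def .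
  then have "sum FA {..<M} = 0" "sum FB {..<M} = 0" using SA0 SB0 by linarith+
  then have "\<forall>i\<in>{..<M}. FA i = 0" "\<forall>i\<in>{..<M}. FB i = 0"
    using sum_nonneg_eq_0_iff[of "{..<M}" FA] sum_nonneg_eq_0_iff[of "{..<M}" FB] FA0 FB0 by auto
  then have za: "\<forall>i\<in>{..<M}. (\<omega> * a $ i + 1 * (T *\<^sub>v a) $ i)^2 + (a $ i)^2 = 0"
    and zb: "\<forall>i\<in>{..<M}. (\<omega> * b $ i + 1 * (T *\<^sub>v b) $ i)^2 + (b $ i)^2 = 0"
    by (simp_all only: FA_def FB_def)
  have a0: "a $ i = 0" if "i < M" for i
  proof -
    have iM: "i \<in> {..<M}" using that by simp
    have "(\<omega> * a $ i + 1 * (T *\<^sub>v a) $ i)^2 + (a $ i)^2 = 0" using za iM by blast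
    moreover have "(\<omega> * a $ i + 1 * (T *\<^sub>v a) $ i)^2 \<ge> 0" "(a $ i)^2 \<ge> 0" by auto
    ultimately have "(a $ i)^2 = 0" by linarith
    then show ?thesis by simp
  qed
  have b0: "b $ i = 0" if "i < M" for i
  proof -
    have iM: "i \<in> {..<M}" using that by simp
    have "(\<omega> * b $ i + 1 * (T *\<^sub>v b) $ i)^2 + (b $ i)^2 = 0" using zb iM by blast
    moreover have "(\<omega> * b $ i + 1 * (T *\<^sub>v b) $ i)^2 \<ge> 0" "(b $ i)^2 \<ge> 0" by auto
    ultimately have "(b $ i)^2 = 0" by linarith
    then show ?thesis by simp
  qed
  show ?thesis
  proof (rule eq_vecI)
    fix i assume "i < dim_vec (0\<^sub>v (2*M) :: real vec)"
    then have i: "i < 2*M" by simp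
    show "v $ i = 0\<^sub>v (2*M) $ i"
    proof (cases "i < M")
      case True
      then show ?thesis using a0[OF True] i unfolding a_def by (simp add: vec_first_def)
    next
      case False
      then have "i - M < M" using i by simp
      then show ?thesis using b0[of "i - M"] i False v unfolding b_def by (simp add: vec_last_def)
    qed
  qed (use v in simp)
qed

lemma Bp_inv: "invertible_mat Bp \<and> inv_mat Bp \<in> carrier_mat (2*M) (2*M) \<and> Bp * inv_mat Bp = 1\<^sub>m (2*M) \<and> inv_mat Bp * Bp = 1\<^sub>m (2*M)"
  by (rule inj_inv[OF carriers(1) Bp_inj])
lemma Hp_inv: "invertible_mat Hp \<and> inv_mat Hp \<in> carrier_mat (2*M) (2*M) \<and> Hp * inv_mat Hp = 1\<^sub>m (2*M) \<and> inv_mat Hp * Hp = 1\<^sub>m (2*M)"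
  by (rule inj_inv[OF carriers(3) Hp_inj])

definition Bi where "Bi = inv_mat Bp"
definition Hi where "Hi = inv_mat Hp"
lemma Bi_c: "Bi \<in> carrier_mat (2*M) (2*M)" and Hi_c: "Hi \<in> carrier_mat (2*M) (2*M)"
  using Bp_inv Hp_inv unfolding Bi_def Hi_def by auto

lemma Bp_Bi: "v \<in> carrier_vec (2*M) \<Longrightarrow> Bp *\<^sub>v (Bi *\<^sub>v v) = v"
  using Bp_inv assoc_mult_mat_vec[OF carriers(1) Bi_c, of v, symmetric] unfolding Bi_def by simp
lemma Hp_Hi: "v \<in> carrier_vec (2*M) \<Longrightarrow> Hp *\<^sub>v (Hi *\<^sub>v v) = v"
  using Hp_inv assoc_mult_mat_vec[OF carriers(3) Hi_c, of v, symmetric] unfolding Hi_def by simp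

definition L where "L = Hi * Bm * Bi * Hm"
lemma L_eq: "Lmat \<omega> T D = L" unfolding Lmat_def L_def Hi_def Bi_def Hp_def Bm_def Bp_def Hm_def Let_def by simp
lemma L_c: "L \<in> carrier_mat (2*M) (2*M)" unfolding L_def using Hi_c Bi_c carriers by auto
lemma L_mult: "v \<in> carrier_vec (2*M) \<Longrightarrow> L *\<^sub>v v = Hi *\<^sub>v (Bm *\<^sub>v (Bi *\<^sub>v (Hm *\<^sub>v v)))"
proof -
  assume v: "v \<in> carrier_vec (2*M)"
  note c = Hi_c Bi_c carriers
  have "L *\<^sub>v v = (Hi * Bm * Bi) *\<^sub>v (Hm *\<^sub>v v)" unfolding L_def
    by (rule assoc_mult_mat_vec) (use c v in auto)
  also have "\<dots> = (Hi * Bm) *\<^sub>v (Bi *\<^sub>v (Hm *\<^sub>v v))"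
    by (rule assoc_mult_mat_vec) (use c v in auto)
  also have "\<dots> = Hi *\<^sub>v (Bm *\<^sub>v (Bi *\<^sub>v (Hm *\<^sub>v v)))"
    by (rule assoc_mult_mat_vec) (use c v in auto)
  finally show ?thesis .
qed

lemma chain_real: assumes x: "x \<in> carrier_vec (2*M)"
  shows "(Hp *\<^sub>v (L *\<^sub>v x)) \<bullet> (Hp *\<^sub>v (L *\<^sub>v x)) \<le> (sigma \<omega> T D)^2 * ((Hp *\<^sub>v x) \<bullet> (Hp *\<^sub>v x))"
proof -
  note c = Hi_c Bi_c carriers
  define u where "u = Bi *\<^sub>v (Hm *\<^sub>v x)"
  have u: "u \<in> carrier_vec (2*M)" unfolding u_def using c x by auto
  have Hmx: "Hm *\<^sub>v x \<in> carrier_vec (2*M)" using c x by auto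
  have "Hp *\<^sub>v (L *\<^sub>v x) = Bm *\<^sub>v u" unfolding L_mult[OF x] u_def
    by (rule Hp_Hi) (use c x in auto)
  then have "(Hp *\<^sub>v (L *\<^sub>v x)) \<bullet> (Hp *\<^sub>v (L *\<^sub>v x)) = (Bm *\<^sub>v u) \<bullet> (Bm *\<^sub>v u)" by simp
  also have "\<dots> \<le> alpha^2 * ((Bp *\<^sub>v u) \<bullet> (Bp *\<^sub>v u))" by (rule K1[OF u])
  also have "Bp *\<^sub>v u = Hm *\<^sub>v x" unfolding u_def by (rule Bp_Bi[OF Hmx])
  also have "alpha^2 * ((Hm *\<^sub>v x) \<bullet> (Hm *\<^sub>v x)) \<le> alpha^2 * (beta^2 * ((Hp *\<^sub>v x) \<bullet> (Hp *\<^sub>v x)))"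
    by (rule mult_left_mono[OF K2[OF x]]) simp
  also have "\<dots> = (sigma \<omega> T D)^2 * ((Hp *\<^sub>v x) \<bullet> (Hp *\<^sub>v x))" unfolding sigma_eq by (simp add: power_mult_distrib)
  finally show ?thesis .
qed

lemma ev_bound: assumes l: "eigenvalue (map_mat complex_of_real L) l" shows "cmod l \<le> sigma \<omega> T D"
proof -
  let ?Lc = "map_mat complex_of_real L"
  let ?Hc = "map_mat complex_of_real Hp"
  from l obtain v where v: "v \<in> carrier_vec (2*M)" and nz: "v \<noteq> 0\<^sub>v (2*M)" and Lv: "?Lc *\<^sub>v v = l \<cdot>\<^sub>v v"
    unfolding eigenvalue_def eigenvector_def using L_c by auto
  have Hpc: "Hp \<in> carrier_mat (2*M) (2*M)" by (rule carriers(3))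
  have Lvc: "?Lc *\<^sub>v v \<in> carrier_vec (2*M)" using L_c v by simp
  have rvL: "rv (?Lc *\<^sub>v v) = L *\<^sub>v rv v" "iv (?Lc *\<^sub>v v) = L *\<^sub>v iv v" using rv_mult[OF L_c v] by auto
  have w: "?Hc *\<^sub>v v \<in> carrier_vec (2*M)" using Hpc v by simp
  have "sqn (?Hc *\<^sub>v (?Lc *\<^sub>v v)) =
     (Hp *\<^sub>v (L *\<^sub>v rv v)) \<bullet> (Hp *\<^sub>v (L *\<^sub>v rv v)) + (Hp *\<^sub>v (L *\<^sub>v iv v)) \<bullet> (Hp *\<^sub>v (L *\<^sub>v iv v))"
    unfolding sqn_split rv_mult[OF Hpc Lvc] rvL ..
  also have "\<dots> \<le> (sigma \<omega> T D)^2 * ((Hp *\<^sub>v rv v) \<bullet> (Hp *\<^sub>v rv v)) + (sigma \<omega> T D)^2 * ((Hp *\<^sub>v iv v) \<bullet> (Hp *\<^sub>v iv v))"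
    by (intro add_mono chain_real) (use v in auto)
  also have "\<dots> = (sigma \<omega> T D)^2 * sqn (?Hc *\<^sub>v v)"
    unfolding sqn_split rv_mult[OF Hpc v] by (simp add: distrib_left)
  finally have le: "sqn (?Hc *\<^sub>v (?Lc *\<^sub>v v)) \<le> (sigma \<omega> T D)^2 * sqn (?Hc *\<^sub>v v)" .
  have "?Hc *\<^sub>v (?Lc *\<^sub>v v) = l \<cdot>\<^sub>v (?Hc *\<^sub>v v)" unfolding Lv
    by (rule mult_mat_vec_smult_right) (use Hpc v in auto)
  then have "sqn (?Hc *\<^sub>v (?Lc *\<^sub>v v)) = (cmod l)^2 * sqn (?Hc *\<^sub>v v)" by (simp add: sqn_smult)
  with le have le2: "(cmod l)^2 * sqn (?Hc *\<^sub>v v) \<le> (sigma \<omega> T D)^2 * sqn (?Hc *\<^sub>v v)" by simp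
  have "?Hc *\<^sub>v v \<noteq> 0\<^sub>v (2*M)"
  proof
    assume h: "?Hc *\<^sub>v v = 0\<^sub>v (2*M)"
    have "rv (?Hc *\<^sub>v v) = 0\<^sub>v (2*M)" "iv (?Hc *\<^sub>v v) = 0\<^sub>v (2*M)" using vec_zero_iff_rv_iv[OF w] h by auto
    then have "Hp *\<^sub>v rv v = 0\<^sub>v (2*M)" "Hp *\<^sub>v iv v = 0\<^sub>v (2*M)" unfolding rv_mult[OF Hpc v] by auto
    then have "rv v = 0\<^sub>v (2*M)" "iv v = 0\<^sub>v (2*M)" using Hp_inj v by auto
    then have "v = 0\<^sub>v (2*M)" using vec_zero_iff_rv_iv[OF v] by simp
    then show False using nz by simp
  qed
  then have "sqn (?Hc *\<^sub>v v) > 0" by (rule sqn_pos[OF w])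
  then have "(cmod l)^2 \<le> (sigma \<omega> T D)^2" using le2 by simp
  then show ?thesis using sigma_ge0 by (simp add: power2_le_iff_abs_le)
qed


definition Fm where "Fm = (1 / (2 * \<omega>)) \<cdot>\<^sub>m (Bp * Hp)"
definition Gm where "Gm = (1 / (2 * \<omega>)) \<cdot>\<^sub>m (Bm * Hm)"
lemma F_eq: "Fmat \<omega> T D = Fm" unfolding Fmat_def Fm_def Bp_def Hp_def Let_def by simp
lemma G_eq: "Gmat \<omega> T D = Gm" unfolding Gmat_def Gm_def Bm_def Hm_def Let_def by simp
lemma Fm_c: "Fm \<in> carrier_mat (2*M) (2*M)" unfolding Fm_def using carriers by auto
lemma Gm_c: "Gm \<in> carrier_mat (2*M) (2*M)" unfolding Gm_def using carriers by auto

lemma F_mult: "v \<in> carrier_vec (2*M) \<Longrightarrow> Fm *\<^sub>v v = (1 / (2 * \<omega>)) \<cdot>\<^sub>v (Bp *\<^sub>v (Hp *\<^sub>v v))"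
  unfolding Fm_def using carriers
  by (subst smult_mat_vec[of _ "2*M" "2*M"]) (auto simp: assoc_mult_mat_vec)
lemma G_mult: "v \<in> carrier_vec (2*M) \<Longrightarrow> Gm *\<^sub>v v = (1 / (2 * \<omega>)) \<cdot>\<^sub>v (Bm *\<^sub>v (Hm *\<^sub>v v))"
  unfolding Gm_def using carriers
  by (subst smult_mat_vec[of _ "2*M" "2*M"]) (auto simp: assoc_mult_mat_vec)

lemma F_inj: assumes v: "v \<in> carrier_vec (2*M)" and z: "Fm *\<^sub>v v = 0\<^sub>v (2*M)" shows "v = 0\<^sub>v (2*M)"
proof -
  have Hv: "Hp *\<^sub>v v \<in> carrier_vec (2*M)" using carriers v by auto
  have BHv: "Bp *\<^sub>v (Hp *\<^sub>v v) \<in> carrier_vec (2*M)" using carriers Hv by auto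
  have "Bp *\<^sub>v (Hp *\<^sub>v v) = 0\<^sub>v (2*M)"
  proof (rule eq_vecI)
    fix i assume "i < dim_vec (0\<^sub>v (2*M) :: real vec)"
    then have i: "i < 2*M" by simp
    have "(Fm *\<^sub>v v) $ i = 0" using z i by simp
    then have "(1 / (2 * \<omega>)) * (Bp *\<^sub>v (Hp *\<^sub>v v)) $ i = 0" unfolding F_mult[OF v] using i BHv by (simp add: carrier_matD[OF carriers(1)])
    then show "(Bp *\<^sub>v (Hp *\<^sub>v v)) $ i = 0\<^sub>v (2*M) $ i" using w0 i by simp
  qed (use BHv carriers(1) in simp)
  then have "Hp *\<^sub>v v = 0\<^sub>v (2*M)" by (rule Bp_inj[OF Hv])
  then show ?thesis by (rule Hp_inj[OF v])
qed

lemma F_inv: "invertible_mat Fm \<and> inv_mat Fm \<in> carrier_mat (2*M) (2*M) \<and> Fm * inv_mat Fm = 1\<^sub>m (2*M) \<and> inv_mat Fm * Fm = 1\<^sub>m (2*M)"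
  by (rule inj_inv[OF Fm_c F_inj])

definition Fi where "Fi = inv_mat Fm"
lemma Fi_c: "Fi \<in> carrier_mat (2*M) (2*M)" using F_inv unfolding Fi_def by auto
lemma Fi_F: "v \<in> carrier_vec (2*M) \<Longrightarrow> Fi *\<^sub>v (Fm *\<^sub>v v) = v"
  using F_inv assoc_mult_mat_vec[OF Fi_c Fm_c, of v, symmetric] unfolding Fi_def by simp

lemma R_split: "Rblk T D = Bblk D + Hblk T"
  by (rule eq_matI) (auto simp: Rblk_def Bblk_def Hblk_def)

lemma R_c: "Rblk T D \<in> carrier_mat (2*M) (2*M)" unfolding R_split using Hblk_c by simp

lemma Bblk_mult: "v \<in> carrier_vec (2*M) \<Longrightarrow> Bblk D *\<^sub>v v = vec (2*M) (\<lambda>i. (- dd i) * v $ i)"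
  by (rule diag_mult[OF Bblk_c]) (auto simp: Bblk_entry)

lemma FG_R: assumes v: "v \<in> carrier_vec (2*M)"
  shows "Fm *\<^sub>v v = Gm *\<^sub>v v + Rblk T D *\<^sub>v v"
proof -
  define h where "h = Hblk T *\<^sub>v v"
  have h: "h \<in> carrier_vec (2*M)" unfolding h_def using Hblk_c v by auto
  have Hpv: "Hp *\<^sub>v v = \<omega> \<cdot>\<^sub>v v + h" unfolding Hp_def h_def by (rule smult_one_minus_mult(2)[OF Hblk_c v])
  have Hmv: "Hm *\<^sub>v v = \<omega> \<cdot>\<^sub>v v - h" unfolding Hm_def h_def by (rule smult_one_minus_mult(1)[OF Hblk_c v])
  have c1: "\<omega> \<cdot>\<^sub>v v + h \<in> carrier_vec (2*M)" "\<omega> \<cdot>\<^sub>v v - h \<in> carrier_vec (2*M)" using v h by auto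
  have Rv: "Rblk T D *\<^sub>v v = Bblk D *\<^sub>v v + h" unfolding R_split h_def
    by (rule add_mult_distrib_mat_vec[OF Bblk_c Hblk_c v])
  have idx: "(Fm *\<^sub>v v) $ i = (Gm *\<^sub>v v + Rblk T D *\<^sub>v v) $ i" if i: "i < 2*M" for i
  proof -
    have d1: "dim_vec (Bp *\<^sub>v (Hp *\<^sub>v v)) = 2*M" "dim_vec (Bm *\<^sub>v (Hm *\<^sub>v v)) = 2*M"
      "dim_vec (Gm *\<^sub>v v) = 2*M" "dim_vec (Rblk T D *\<^sub>v v) = 2*M" "dim_vec (Bblk D *\<^sub>v v) = 2*M"
      using carriers Gm_c R_c Bblk_c by auto
    have f: "(Fm *\<^sub>v v) $ i = (1 / (2 * \<omega>)) * ((\<omega> - dd i) * (\<omega> * v $ i + h $ i))"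
      unfolding F_mult[OF v] Hpv Bp_mult[OF c1(1)] using i v h by simp
    have g: "(Gm *\<^sub>v v) $ i = (1 / (2 * \<omega>)) * ((\<omega> + dd i) * (\<omega> * v $ i - h $ i))"
      unfolding G_mult[OF v] Hmv Bm_mult[OF c1(2)] using i v h by simp
    have r: "(Rblk T D *\<^sub>v v) $ i = - dd i * v $ i + h $ i"
      unfolding Rv Bblk_mult[OF v] using i v h by simp
    have "(Gm *\<^sub>v v + Rblk T D *\<^sub>v v) $ i = (Gm *\<^sub>v v) $ i + (Rblk T D *\<^sub>v v) $ i"
      using i d1 by simp
    also have "\<dots> = (1 / (2 * \<omega>)) * ((\<omega> + dd i) * (\<omega> * v $ i - h $ i)) + (- dd i * v $ i + h $ i)"
      unfolding g r ..
    also have "\<dots> = (1 / (2 * \<omega>)) * ((\<omega> - dd i) * (\<omega> * v $ i + h $ i))"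
      using w0 by (simp add: field_simps)
    finally show ?thesis unfolding f by simp
  qed
  show ?thesis by (rule eq_vecI) (use idx Fm_c Gm_c R_c v in auto)
qed

lemma FL_G: assumes y: "y \<in> carrier_vec (2*M)" shows "Fm *\<^sub>v (L *\<^sub>v y) = Gm *\<^sub>v y"
proof -
  note c = Hi_c Bi_c carriers
  define w where "w = Bi *\<^sub>v (Hm *\<^sub>v y)"
  have w: "w \<in> carrier_vec (2*M)" unfolding w_def using c y by auto
  have Ly: "L *\<^sub>v y \<in> carrier_vec (2*M)" using L_c y by auto
  have Bmw: "Bm *\<^sub>v w \<in> carrier_vec (2*M)" using c w by auto
  have Hmy: "Hm *\<^sub>v y \<in> carrier_vec (2*M)" using c y by auto
  have "Hp *\<^sub>v (L *\<^sub>v y) = Bm *\<^sub>v w" unfolding L_mult[OF y] w_def by (rule Hp_Hi) (use c y in auto)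
  moreover have "Bp *\<^sub>v (Bm *\<^sub>v w) = Bm *\<^sub>v (Bp *\<^sub>v w)"
  proof -
    have Bpw: "Bp *\<^sub>v w \<in> carrier_vec (2*M)" using c w by auto
    show ?thesis unfolding Bp_mult[OF Bmw] Bm_mult[OF Bpw] unfolding Bm_mult[OF w] Bp_mult[OF w]
      by (rule eq_vecI) (auto simp: algebra_simps)
  qed
  moreover have "Bp *\<^sub>v w = Hm *\<^sub>v y" unfolding w_def by (rule Bp_Bi[OF Hmy])
  ultimately show ?thesis unfolding F_mult[OF Ly] G_mult[OF y] by simp
qed

lemma Fi_G: "y \<in> carrier_vec (2*M) \<Longrightarrow> Fi *\<^sub>v (Gm *\<^sub>v y) = L *\<^sub>v y"
  using FL_G[of y] Fi_F[of "L *\<^sub>v y"] L_c by auto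


lemma specrad: "spectral_radius (map_mat complex_of_real L) \<le> sigma \<omega> T D"
proof -
  have Lc: "map_mat complex_of_real L \<in> carrier_mat (2*M) (2*M)" using L_c by simp
  have n: "2 * M > 0" using M0 by simp
  from spectral_radius_mem_max(1)[OF Lc n] obtain l where l: "l \<in> spectrum (map_mat complex_of_real L)"
    and r: "spectral_radius (map_mat complex_of_real L) = cmod l" by auto
  from l have "eigenvalue (map_mat complex_of_real L) l" unfolding spectrum_def by simp
  from ev_bound[OF this] show ?thesis unfolding r .
qed

lemma R_inj: assumes v: "v \<in> carrier_vec (2*M)" and z: "Rblk T D *\<^sub>v v = 0\<^sub>v (2*M)" shows "v = 0\<^sub>v (2*M)"
proof (rule ccontr)
  assume nz: "v \<noteq> 0\<^sub>v (2*M)"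
  have Gv: "Gm *\<^sub>v v \<in> carrier_vec (2*M)" using Gm_c v by simp
  have "Fm *\<^sub>v v = Gm *\<^sub>v v" unfolding FG_R[OF v] z using Gv by simp
  then have "Fi *\<^sub>v (Fm *\<^sub>v v) = Fi *\<^sub>v (Gm *\<^sub>v v)" by simp
  then have Lv: "L *\<^sub>v v = v" unfolding Fi_F[OF v] Fi_G[OF v] by simp
  have "eigenvector L v 1" unfolding eigenvector_def using v nz Lv L_c by auto
  from of_real_hom.eigenvector_hom[OF L_c this]
  have "eigenvalue (map_mat complex_of_real L) 1" unfolding eigenvalue_def by auto
  from ev_bound[OF this] sigma_lt1 show False by simp
qed

lemma convergence: assumes f: "f \<in> carrier_vec (2 * M)" and x0: "x0 \<in> carrier_vec (2 * M)"
  shows "\<exists>x \<in> carrier_vec (2 * M). Rblk T D *\<^sub>v x = f \<and>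
               vec_tendsto (\<lambda>k. ((\<lambda>v. L *\<^sub>v v + Fi *\<^sub>v f) ^^ k) x0) x"
proof -
  from inj_inv[OF R_c R_inj] have Ri: "inv_mat (Rblk T D) \<in> carrier_mat (2*M) (2*M)"
    "Rblk T D * inv_mat (Rblk T D) = 1\<^sub>m (2*M)" by auto
  define x where "x = inv_mat (Rblk T D) *\<^sub>v f"
  have x: "x \<in> carrier_vec (2*M)" unfolding x_def using Ri f by simp
  have Rx: "Rblk T D *\<^sub>v x = f" unfolding x_def
    using assoc_mult_mat_vec[OF R_c Ri(1) f, symmetric] Ri(2) f by simp
  have Fx: "Fm *\<^sub>v x \<in> carrier_vec (2*M)" and Gx: "Gm *\<^sub>v x \<in> carrier_vec (2*M)"
    and Lx: "L *\<^sub>v x \<in> carrier_vec (2*M)" using Fm_c Gm_c L_c x by auto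
  have fFG: "f = Fm *\<^sub>v x - Gm *\<^sub>v x" unfolding Rx[symmetric] FG_R[OF x]
    by (rule eq_vecI) (use R_c Gm_c x in auto)
  have Fif: "Fi *\<^sub>v f = x - L *\<^sub>v x"
    unfolding fFG mult_minus_distrib_mat_vec[OF Fi_c Fx Gx] Fi_F[OF x] Fi_G[OF x] ..
  define it where "it = (\<lambda>v. L *\<^sub>v v + Fi *\<^sub>v f)"
  have itc: "(it ^^ k) x0 \<in> carrier_vec (2*M)" for k
    by (induct k) (use x0 L_c Fi_c f in \<open>auto simp: it_def\<close>)
  define e where "e k = (it ^^ k) x0 - x" for k
  have ec: "e k \<in> carrier_vec (2*M)" for k unfolding e_def using itc x by simp
  have estep: "e (Suc k) = L *\<^sub>v e k" for k
  proof -
    have "L *\<^sub>v e k = L *\<^sub>v (it ^^ k) x0 - L *\<^sub>v x" unfolding e_def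
      by (rule mult_minus_distrib_mat_vec[OF L_c itc x])
    moreover have "e (Suc k) = L *\<^sub>v (it ^^ k) x0 + (x - L *\<^sub>v x) - x"
      unfolding e_def it_def Fif by simp
    moreover have "L *\<^sub>v (it ^^ k) x0 \<in> carrier_vec (2*M)" using L_c itc by simp
    ultimately show ?thesis using vec_arith1[OF _ x Lx] by simp
  qed
  have epow: "e k = (L ^\<^sub>m k) *\<^sub>v e 0" for k
  proof -
    have "e k = ((\<lambda>v. L *\<^sub>v v) ^^ k) (e 0)" by (induct k) (auto simp: estep)
    then show ?thesis using pow_mat_vec_funpow[OF L_c ec[of 0]] by simp
  qed
  define r where "r = (1 + sigma \<omega> T D) / 2"
  have r0: "r > 0" and r1: "r < 1" unfolding r_def using sigma_ge0 sigma_lt1 by auto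
  have evr: "cmod l < r" if "eigenvalue (map_mat complex_of_real L) l" for l
    using ev_bound[OF that] sigma_lt1 unfolding r_def by simp
  have n: "2 * M > 0" using M0 by simp
  from pow_bound[OF L_c n r0 evr] obtain c where
    c: "\<And>k i j. i < 2*M \<Longrightarrow> j < 2*M \<Longrightarrow> \<bar>(L ^\<^sub>m k) $$ (i,j)\<bar> \<le> c * r ^ k" by blast
  define s where "s = (\<Sum>j<2*M. \<bar>e 0 $ j\<bar>)"
  have s0: "s \<ge> 0" unfolding s_def by (simp add: sum_nonneg)
  have "vec_tendsto (\<lambda>k. (it ^^ k) x0) x"
    unfolding vec_tendsto_def
  proof (intro allI impI)
    fix i assume "i < dim_vec x"
    then have i: "i < 2*M" using x by simp
    have bd: "\<bar>e k $ i\<bar> \<le> (c * r^k) * s" for k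
      unfolding epow[of k] s_def by (rule mat_vec_entry_bound[OF pow_carrier_mat[OF L_c] ec c i])
    have "(\<lambda>k. e k $ i) \<longlonglongrightarrow> 0"
    proof (rule tendsto_0_le[where K = "\<bar>c\<bar> * s"])
      show "(\<lambda>k. r ^ k) \<longlonglongrightarrow> 0" using r0 r1 by (intro LIMSEQ_power_zero) simp
      show "\<forall>\<^sub>F k in sequentially. norm (e k $ i) \<le> norm (r ^ k) * (\<bar>c\<bar> * s)"
      proof (rule always_eventually, rule allI)
        fix k
        have "c * r^k * s \<le> \<bar>c\<bar> * r^k * s" using r0 s0
          by (intro mult_right_mono mult_right_mono) auto
        then show "norm (e k $ i) \<le> norm (r ^ k) * (\<bar>c\<bar> * s)" using bd[of k] r0
          by (simp add: abs_mult mult_ac)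
      qed
    qed
    moreover have "(it ^^ k) x0 $ i = x $ i + e k $ i" for k unfolding e_def using itc x i by simp
    ultimately show "(\<lambda>k. (it ^^ k) x0 $ i) \<longlonglongrightarrow> x $ i"
      using tendsto_add[OF tendsto_const[of "x $ i"], of "\<lambda>k. e k $ i" 0] by simp
  qed
  then show ?thesis using x Rx unfolding it_def by blast
qed

lemma main:
  shows "invertible_mat (\<omega> \<cdot>\<^sub>m 1\<^sub>m (2 * M) + Bblk D)
       \<and> invertible_mat (\<omega> \<cdot>\<^sub>m 1\<^sub>m (2 * M) + Hblk T)
       \<and> spectral_radius (map_mat complex_of_real (Lmat \<omega> T D)) \<le> sigma \<omega> T D
       \<and> sigma \<omega> T D < 1
       \<and> (\<forall>f x0. f \<in> carrier_vec (2 * M) \<longrightarrow> x0 \<in> carrier_vec (2 * M) \<longrightarrow>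
            (\<exists>x \<in> carrier_vec (2 * M). Rblk T D *\<^sub>v x = f \<and>
               vec_tendsto (\<lambda>k. ((\<lambda>v. Lmat \<omega> T D *\<^sub>v v + inv_mat (Fmat \<omega> T D) *\<^sub>v f) ^^ k) x0) x))"
  using Bp_inv Hp_inv specrad sigma_lt1 convergence
  unfolding Bp_def[symmetric] Hp_def[symmetric] L_eq F_eq Fi_def[symmetric] by blast

end

theorem theorem1:
  fixes T D :: "real mat" and M :: nat and \<omega> :: real
  assumes "M > 0"
    and "spd_mat M T"
    and "D \<in> carrier_mat M M" and "diagonal_mat D" and "\<forall>i < M. D $$ (i, i) \<le> 0"
    and "\<omega> > 0"
  shows "invertible_mat (\<omega> \<cdot>\<^sub>m 1\<^sub>m (2 * M) + Bblk D)
       \<and> invertible_mat (\<omega> \<cdot>\<^sub>m 1\<^sub>m (2 * M) + Hblk T)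
       \<and> spectral_radius (map_mat complex_of_real (Lmat \<omega> T D)) \<le> sigma \<omega> T D
       \<and> sigma \<omega> T D < 1
       \<and> (\<forall>f x0. f \<in> carrier_vec (2 * M) \<longrightarrow> x0 \<in> carrier_vec (2 * M) \<longrightarrow>
            (\<exists>x \<in> carrier_vec (2 * M). Rblk T D *\<^sub>v x = f \<and>
               vec_tendsto (\<lambda>k. ((\<lambda>v. Lmat \<omega> T D *\<^sub>v v + inv_mat (Fmat \<omega> T D) *\<^sub>v f) ^^ k) x0) x))"
proof -
  interpret prob T D M \<omega> using assms by unfold_locales
  show ?thesis by (rule main)
qed

end
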